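(* Let $n\ge 4$. Consider the NSGA-II with population size $N\ge 4(n+1)$ (with $N$ even in the two-permutation case) optimizing \textsc{OneMinMax}, where the offspring population is generated by selecting $N$ parents via independent binary tournaments or via two-permutation binary tournaments and applying one-bit mutation or standard bit-wise mutation to each selected parent. Let $T$ be the number of iterations until $f(P_T)$ contains the whole Pareto front. Then $E[T]\le\frac{200e}{3}n(\ln n+1)$ (hence at most $\frac{200e}{3}Nn(\ln n+1)$ fitness evaluations, counting $N$ per iteration), and for every $\delta\ge 0$, $\Pr\!\left[T\ge\frac{200e}{3}(1+\delta)n\ln n\right]\le 2n^{-\delta}$.
   Context: Search space $\{0,1\}^n$; objective $f=(f_1,f_2):\{0,1\}^n\to\mathbb{R}^2$, both objectives maximized. $x$ strictly dominates $y$ if $f_1(x)\ge f_1(y)$, $f_2(x)\ge f_2(y)$ and at least one inequality is strict. Populations are multisets of bit strings; for a population $P$, $f(P)=\{f(x):x\in P\}$. Non-dominated sorting of a population $S$: $F_1$ is the set of individuals of $S$ not strictly dominated by any individual of $S$; inductively, $F_{k+1}$ is the set of individuals of $S\setminus(F_1\cup\dots\cup F_k)$ not strictly dominated by any individual of $S\setminus(F_1\cup\dots\cup F_k)$; the rank of $x$ in $S$ is the $k$ with $x\in F_k$. Crowding distance of the individuals of a set $S$ (computed with respect to $S$): start with $\mathrm{cDis}(x)=0$ for all $x\in S$; for each $i\in\{1,2\}$, sort $S$ in ascending $f_i$-value as $S_{i.1},\dots,S_{i.|S|}$ (ties broken arbitrarily), set $\mathrm{cDis}(S_{i.1})=\mathrm{cDis}(S_{i.|S|})=+\infty$,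 and for $2\le j\le |S|-1$ add $\frac{f_i(S_{i.j+1})-f_i(S_{i.j-1})}{f_i(S_{i.|S|})-f_i(S_{i.1})}$ to $\mathrm{cDis}(S_{i.j})$ (if $f_i$ is constant on $S$, these summands are taken to be $0$). The NSGA-II with population size $N$: $P_0$ consists of $N$ independent uniformly random bit strings; in iteration $t=0,1,2,\dots$ it generates an offspring population $Q_t$ of $N$ individuals, sets $R_t=P_t\cup Q_t$ (multiset union, $2N$ individuals), computes the fronts $F_1,F_2,\dots$ of $R_t$, lets $i^*$ be minimal with $\sum_{i\le i^*}|F_i|\ge N$, computes the crowding distance of each individual of $F_i$ ($i\le i^*$) with respect to $F_i$, and sets $P_{t+1}=F_1\cup\dots\cup F_{i^*-1}\cup\tilde F_{i^*}$, where $\tilde F_{i^*}$ consists of the $N-\sum_{i<i^*}|F_i|$ individuals of $F_{i^*}$ with largest crowding distance, ties broken uniformly at random. Parent selection: a binary tournament between two individuals of $P_t$ selects the one with smaller rank in $P_t$, or if ranks are equal the one with larger crowding distance (computed within its front of $P_t$), ties broken uniformly at random. Independent binary tournaments: $N$ times independently, two different individuals of $P_t$ are chosen uniformly at random and the tournament winner is a parent. Two-permutation binary tournaments ($N$ even): two independent uniformly random permutations $\pi_1,\pi_2$ of $P_t$; for each $j\in\{1,2\}$ and $i\in\{1,\dots,N/2\}$ the winner of the tournament between $\pi_j(2i-1)$ and $\pi_j(2i)$ is a parent. Each of the $N$ parents is mutated once to give $Q_t$. One-bit mutation flips exactly one uniformly random bit; standard bit-wise mutation flips each bit independently with probability $1/n$;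 all random choices are independent. \textsc{OneMinMax}: $f(x)=(n-\sum_{i=1}^n x_i,\ \sum_{i=1}^n x_i)$; its Pareto front is $\{(k,n-k):k\in\{0,\dots,n\}\}$. *)

theory Defs
  imports "HOL-Probability.Probability"
begin

type_synonym bits = "bool list"
type_synonym pop = "bool list list"

definition ones :: "bits \<Rightarrow> nat" where
  "ones x = length (filter id x)"

definition omm :: "nat \<Rightarrow> nat \<Rightarrow> bits \<Rightarrow> nat" where
  "omm n j x = (if j = 1 then n - ones x else ones x)"

definition fval :: "nat \<Rightarrow> bits \<Rightarrow> nat \<times> nat" where
  "fval n x = (omm n 1 x, omm n 2 x)"

definition sdom :: "nat \<Rightarrow> bits \<Rightarrow> bits \<Rightarrow> bool" where
  "sdom n x y \<longleftrightarrow> omm n 1 x \<ge> omm n 1 y \<and> omm n 2 x \<ge> omm n 2 y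
      \<and> (omm n 1 x > omm n 1 y \<or> omm n 2 x > omm n 2 y)"

definition pareto_front :: "nat \<Rightarrow> (nat \<times> nat) set" where
  "pareto_front n = {(k, n - k) | k. k \<le> n}"

definition covers_front :: "nat \<Rightarrow> pop \<Rightarrow> bool" where
  "covers_front n P \<longleftrightarrow> pareto_front n \<subseteq> fval n ` set P"

fun remaining :: "nat \<Rightarrow> pop \<Rightarrow> nat \<Rightarrow> nat set" where
  "remaining n R 0 = {..<length R}"
| "remaining n R (Suc k) = remaining n R k -
     {i \<in> remaining n R k. \<not> (\<exists>j\<in>remaining n R k. sdom n (R!j) (R!i))}"

text \<open>Front F_(k+1) (fronts are numbered from 1).\<close>
definition front :: "nat \<Rightarrow> pop \<Rightarrow> nat \<Rightarrow> nat set" where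
  "front n R k = {i \<in> remaining n R (k - 1). \<not> (\<exists>j\<in>remaining n R (k - 1). sdom n (R!j) (R!i))}"

definition rank :: "nat \<Rightarrow> pop \<Rightarrow> nat \<Rightarrow> nat" where
  "rank n R i = (LEAST k. k \<ge> 1 \<and> i \<in> front n R k)"

text \<open>Ties are broken arbitrarily, i.e. the theorem is quantified over all such rules.\<close>
definition valid_tb :: "nat \<Rightarrow> (pop \<Rightarrow> nat \<Rightarrow> nat set \<Rightarrow> nat list) \<Rightarrow> bool" where
  "valid_tb n tb \<longleftrightarrow> (\<forall>R j S. S \<subseteq> {..<length R} \<longrightarrow>
      distinct (tb R j S) \<and> set (tb R j S) = S \<and> sorted (map (\<lambda>i. omm n j (R!i)) (tb R j S)))"

definition cd_comp :: "nat \<Rightarrow> (pop \<Rightarrow> nat \<Rightarrow> nat set \<Rightarrow> nat list) \<Rightarrow> pop \<Rightarrow> nat set \<Rightarrow> nat \<Rightarrow> nat \<Rightarrow> ereal" where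
  "cd_comp n tb R S j i =
     (let L = tb R j S; m = length L; k = (THE k. k < m \<and> L ! k = i); v = (\<lambda>p. real (omm n j (R ! (L ! p))))
      in if k = 0 \<or> k = m - 1 then \<infinity>
         else if v (m - 1) = v 0 then 0
         else ereal ((v (k + 1) - v (k - 1)) / (v (m - 1) - v 0)))"

definition cdis :: "nat \<Rightarrow> (pop \<Rightarrow> nat \<Rightarrow> nat set \<Rightarrow> nat list) \<Rightarrow> pop \<Rightarrow> nat set \<Rightarrow> nat \<Rightarrow> ereal" where
  "cdis n tb R S i = cd_comp n tb R S 1 i + cd_comp n tb R S 2 i"

definition cdis_front :: "nat \<Rightarrow> (pop \<Rightarrow> nat \<Rightarrow> nat set \<Rightarrow> nat list) \<Rightarrow> pop \<Rightarrow> nat \<Rightarrow> ereal" where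
  "cdis_front n tb R i = cdis n tb R (front n R (rank n R i)) i"

definition istar :: "nat \<Rightarrow> pop \<Rightarrow> nat \<Rightarrow> nat" where
  "istar n R N = (LEAST k. card {i \<in> {..<length R}. rank n R i \<le> k} \<ge> N)"

definition survive :: "nat \<Rightarrow> (pop \<Rightarrow> nat \<Rightarrow> nat set \<Rightarrow> nat list) \<Rightarrow> nat \<Rightarrow> pop \<Rightarrow> pop pmf" where
  "survive n tb N R =
     (let ist = istar n R N;
          low = {i \<in> {..<length R}. rank n R i < ist};
          F = front n R ist;
          m = N - card low
      in map_pmf (\<lambda>A. map (\<lambda>i. R ! i) (sorted_list_of_set (low \<union> A)))
           (pmf_of_set {A. A \<subseteq> F \<and> card A = m \<and>
               (\<forall>a\<in>A. \<forall>b\<in>F - A. cdis n tb R F b \<le> cdis n tb R F a)}))"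

definition tourn :: "nat \<Rightarrow> (pop \<Rightarrow> nat \<Rightarrow> nat set \<Rightarrow> nat list) \<Rightarrow> pop \<Rightarrow> nat \<Rightarrow> nat \<Rightarrow> nat pmf" where
  "tourn n tb P a b =
     (if rank n P a < rank n P b then return_pmf a
      else if rank n P b < rank n P a then return_pmf b
      else if cdis_front n tb P a > cdis_front n tb P b then return_pmf a
      else if cdis_front n tb P b > cdis_front n tb P a then return_pmf b
      else pmf_of_set {a, b})"

datatype mutation = OneBit | Bitwise
datatype selection = Independent | TwoPerm

definition flip_bit :: "bits \<Rightarrow> nat \<Rightarrow> bits" where
  "flip_bit x i = x[i := \<not> x ! i]"

primrec bitwise_mut :: "nat \<Rightarrow> bits \<Rightarrow> bits pmf" where
  "bitwise_mut n [] = return_pmf []"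
| "bitwise_mut n (b # bs) =
     do { c \<leftarrow> bernoulli_pmf (1 / real n); r \<leftarrow> bitwise_mut n bs; return_pmf ((b \<noteq> c) # r) }"

definition mutate :: "mutation \<Rightarrow> nat \<Rightarrow> bits \<Rightarrow> bits pmf" where
  "mutate mu n x = (case mu of
      OneBit \<Rightarrow> map_pmf (flip_bit x) (pmf_of_set {..<n})
    | Bitwise \<Rightarrow> bitwise_mut n x)"

primrec seq_pmf :: "'a pmf list \<Rightarrow> 'a list pmf" where
  "seq_pmf [] = return_pmf []"
| "seq_pmf (p # ps) = do { x \<leftarrow> p; xs \<leftarrow> seq_pmf ps; return_pmf (x # xs) }"

definition offspring :: "selection \<Rightarrow> mutation \<Rightarrow> nat \<Rightarrow> (pop \<Rightarrow> nat \<Rightarrow> nat set \<Rightarrow> nat list) \<Rightarrow> nat \<Rightarrow> pop \<Rightarrow> pop pmf" where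
  "offspring sel mu n tb N P = (case sel of
      Independent \<Rightarrow>
        replicate_pmf N (do { ab \<leftarrow> pmf_of_set {(a, b). a < N \<and> b < N \<and> a \<noteq> b};
                              w \<leftarrow> tourn n tb P (fst ab) (snd ab);
                              mutate mu n (P ! w) })
    | TwoPerm \<Rightarrow>
        do { \<pi>1 \<leftarrow> pmf_of_set {xs. distinct xs \<and> set xs = {..<N}};
             \<pi>2 \<leftarrow> pmf_of_set {xs. distinct xs \<and> set xs = {..<N}};
             seq_pmf (map (\<lambda>(\<pi>, i). do { w \<leftarrow> tourn n tb P (\<pi> ! (2 * i)) (\<pi> ! (2 * i + 1));
                                         mutate mu n (P ! w) })
                         [(\<pi>, i). \<pi> \<leftarrow> [\<pi>1, \<pi>2], i \<leftarrow> [0..<N div 2]]) })"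

definition nsga_step :: "selection \<Rightarrow> mutation \<Rightarrow> nat \<Rightarrow> (pop \<Rightarrow> nat \<Rightarrow> nat set \<Rightarrow> nat list) \<Rightarrow> nat \<Rightarrow> pop \<Rightarrow> pop pmf" where
  "nsga_step sel mu n tb N P = do { Q \<leftarrow> offspring sel mu n tb N P; survive n tb N (P @ Q) }"

definition init_pop :: "nat \<Rightarrow> nat \<Rightarrow> pop pmf" where
  "init_pop n N = replicate_pmf N (pmf_of_set {x. length x = n})"

text \<open>Augmented chain: state (P_t, h_t) where h_t says whether one of P_0, ..., P_(t-1)
  already covers the Pareto front.\<close>
fun aug_state :: "selection \<Rightarrow> mutation \<Rightarrow> nat \<Rightarrow> (pop \<Rightarrow> nat \<Rightarrow> nat set \<Rightarrow> nat list) \<Rightarrow> nat \<Rightarrow> nat \<Rightarrow> (pop \<times> bool) pmf" where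
  "aug_state sel mu n tb N 0 = map_pmf (\<lambda>P. (P, False)) (init_pop n N)"
| "aug_state sel mu n tb N (Suc t) =
     do { (P, h) \<leftarrow> aug_state sel mu n tb N t;
          P' \<leftarrow> nsga_step sel mu n tb N P;
          return_pmf (P', h \<or> covers_front n P) }"

text \<open>Pr[T \<ge> t], where T = min {t. f(P_t) contains the Pareto front}.\<close>
definition prob_T_ge :: "selection \<Rightarrow> mutation \<Rightarrow> nat \<Rightarrow> (pop \<Rightarrow> nat \<Rightarrow> nat set \<Rightarrow> nat list) \<Rightarrow> nat \<Rightarrow> nat \<Rightarrow> real" where
  "prob_T_ge sel mu n tb N t = measure_pmf.prob (aug_state sel mu n tb N t) {s. \<not> snd s}"

text \<open>E[T] = sum over t \<ge> 1 of Pr[T \<ge> t] (in [0, \<infinity>]).\<close>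
definition expected_T :: "selection \<Rightarrow> mutation \<Rightarrow> nat \<Rightarrow> (pop \<Rightarrow> nat \<Rightarrow> nat set \<Rightarrow> nat list) \<Rightarrow> nat \<Rightarrow> ennreal" where
  "expected_T sel mu n tb N = (\<Sum>t. ennreal (prob_T_ge sel mu n tb N (Suc t)))"

end

theory Submission
  imports Defs
begin


definition cdv :: "(nat \<Rightarrow> real) \<Rightarrow> nat \<Rightarrow> nat \<Rightarrow> ereal" where
  "cdv v m k = (if k = 0 \<or> k = m - 1 then \<infinity> else if v (m-1) = v 0 then 0
      else ereal ((v (k+1) - v (k-1)) / (v (m-1) - v 0)))"

definition monov :: "(nat \<Rightarrow> real) \<Rightarrow> nat \<Rightarrow> bool" where
  "monov v m \<longleftrightarrow> (\<forall>p q. p \<le> q \<longrightarrow> q < m \<longrightarrow> v p \<le> v q)"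

lemma monovD: "monov v m \<Longrightarrow> p \<le> q \<Longrightarrow> q < m \<Longrightarrow> v p \<le> v q"
  by (auto simp: monov_def)

lemma cdv_nonneg: assumes "monov v m" "k < m" shows "cdv v m k \<ge> 0"
proof -
  { assume h: "k \<noteq> 0" "k \<noteq> m - 1" "v (m-1) \<noteq> v 0"
    have "v (k-1) \<le> v (k+1)" using h assms by (intro monovD) auto
    moreover have "v 0 \<le> v (m-1)" using h assms by (intro monovD) auto
    ultimately have "(v (k+1) - v (k-1)) / (v (m-1) - v 0) \<ge> 0" by simp }
  thus ?thesis unfolding cdv_def by auto
qed

lemma cdv_pos_cases: assumes "monov v m" "k < m" "cdv v m k > 0"
  shows "(k = 0 \<or> v (k-1) < v k) \<or> (k = m - 1 \<or> v k < v (k+1))"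
proof (rule ccontr)
  assume "\<not> ?thesis"
  hence h: "k \<noteq> 0" "k \<noteq> m-1" "v (k-1) \<ge> v k" "v k \<ge> v (k+1)" by auto
  have a1: "v (k-1) \<le> v k" using h assms by (intro monovD) auto
  have a2: "v k \<le> v (k+1)" using h assms by (intro monovD) auto
  have "v (k+1) = v (k-1)" using h a1 a2 by simp
  hence "cdv v m k = 0" using h unfolding cdv_def by auto
  thus False using assms by simp
qed

lemma starts_inj: assumes "monov v m"
  shows "inj_on v {k. k < m \<and> (k = 0 \<or> v (k-1) < v k)}"
proof (rule inj_onI)
  fix p q assume p: "p \<in> {k. k < m \<and> (k = 0 \<or> v (k-1) < v k)}" and q: "q \<in> {k. k < m \<and> (k = 0 \<or> v (k-1) < v k)}" and e: "v p = v q"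
  have key: False if p: "p \<in> {k. k < m \<and> (k = 0 \<or> v (k-1) < v k)}" and q: "q \<in> {k. k < m \<and> (k = 0 \<or> v (k-1) < v k)}" and e: "v p = v q" and lt: "p < q" for p q
  proof -
    have "v p \<le> v (q-1)" using lt q by (intro monovD[OF assms]) auto
    moreover have "v (q-1) < v q" using q lt by auto
    ultimately show False using e by simp
  qed
  show "p = q"
  proof (cases p q rule: linorder_cases)
    case less thus ?thesis using key[OF p q e] by blast
  next
    case greater thus ?thesis using key[OF q p e[symmetric]] by blast
  qed
qed

lemma ends_inj: assumes "monov v m"
  shows "inj_on v {k. k < m \<and> (k = m - 1 \<or> v k < v (k+1))}"
proof (rule inj_onI)
  fix p q assume p: "p \<in> {k. k < m \<and> (k = m - 1 \<or> v k < v (k+1))}" and q: "q \<in> {k. k < m \<and> (k = m - 1 \<or> v k < v (k+1))}" and e: "v p = v q"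
  have key: False if p: "p \<in> {k. k < m \<and> (k = m - 1 \<or> v k < v (k+1))}" and q: "q \<in> {k. k < m \<and> (k = m - 1 \<or> v k < v (k+1))}" and e: "v p = v q" and lt: "p < q" for p q
  proof -
    have "v (p+1) \<le> v q" using lt q by (intro monovD[OF assms]) auto
    moreover have "v p < v (p+1)" using p lt q by auto
    ultimately show False using e by simp
  qed
  show "p = q"
  proof (cases p q rule: linorder_cases)
    case less thus ?thesis using key[OF p q e] by blast
  next
    case greater thus ?thesis using key[OF q p e[symmetric]] by blast
  qed
qed

lemma card_cdv_pos: assumes "monov v m" "v ` {..<m} \<subseteq> W" "finite W"
  shows "card {k. k < m \<and> cdv v m k > 0} \<le> 2 * card W"
proof -
  let ?A = "{k. k < m \<and> (k = 0 \<or> v (k-1) < v k)}"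
  let ?B = "{k. k < m \<and> (k = m - 1 \<or> v k < v (k+1))}"
  have sub: "{k. k < m \<and> cdv v m k > 0} \<subseteq> ?A \<union> ?B"
    using cdv_pos_cases[OF assms(1)] by blast
  have "card ?A = card (v ` ?A)" using starts_inj[OF assms(1)] by (simp add: card_image)
  also have "\<dots> \<le> card W" using assms by (intro card_mono) auto
  finally have a: "card ?A \<le> card W" .
  have "card ?B = card (v ` ?B)" using ends_inj[OF assms(1)] by (simp add: card_image)
  also have "\<dots> \<le> card W" using assms by (intro card_mono) auto
  finally have b: "card ?B \<le> card W" .
  have "card {k. k < m \<and> cdv v m k > 0} \<le> card (?A \<union> ?B)" by (intro card_mono sub) auto
  also have "\<dots> \<le> card ?A + card ?B" by (rule card_Un_le)
  finally show ?thesis using a b by simp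
qed

lemma cdv_first_pos: assumes "monov v m" "p < m" "p = 0 \<or> v (p-1) < v p"
  shows "cdv v m p > 0"
proof (cases "p = 0 \<or> p = m - 1")
  case True thus ?thesis by (simp add: cdv_def)
next
  case False
  hence h: "p \<noteq> 0" "p \<noteq> m-1" "v (p-1) < v p" using assms by auto
  have a1: "v p \<le> v (p+1)" using h assms by (intro monovD) auto
  have a2: "v 0 \<le> v (p-1)" using h assms by (intro monovD) auto
  have a3: "v p \<le> v (m-1)" using h assms by (intro monovD) auto
  from a1 a2 a3 h have "v (p+1) - v (p-1) > 0" "v (m-1) - v 0 > 0" using h by auto
  thus ?thesis using h unfolding cdv_def by (auto simp: field_simps)
qed

lemma exists_first: assumes "monov v m" "k < m"
  shows "\<exists>p<m. v p = v k \<and> (p = 0 \<or> v (p-1) < v p)"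
proof -
  define p where "p = (LEAST p. v p = v k)"
  have vp: "v p = v k" unfolding p_def by (rule LeastI) simp
  have pk: "p \<le> k" unfolding p_def by (rule Least_le) simp
  have "p = 0 \<or> v (p-1) < v p"
  proof (cases "p = 0")
    case False
    have "v (p-1) \<noteq> v k" proof
      assume "v (p-1) = v k" hence "p \<le> p - 1" unfolding p_def by (rule Least_le)
      thus False using False by simp qed
    moreover have "v (p-1) \<le> v p" using pk assms False by (intro monovD) auto
    ultimately show ?thesis using vp by auto
  qed simp
  thus ?thesis using vp pk assms(2) by (intro exI[of _ p]) auto
qed

lemma aux4: "(x0::real) \<le> x1 \<Longrightarrow> x2 \<le> x3 \<Longrightarrow> x1 \<le> x3 \<Longrightarrow> x0 \<le> x2 \<Longrightarrow> x3 - x1 + (x2 - x0) \<le> 2*(x3 - x0)"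
  by (simp add: algebra_simps)

lemma cdv_sum: assumes "monov v m" "m \<ge> 2"
  shows "(\<Sum>k\<in>{1..<m-1}. v (k+1) - v (k-1)) \<le> 2 * (v (m-1) - v 0)"
proof -
  have "(\<Sum>k\<in>{1..<m-1}. v (k+1) - v (k-1)) = (\<Sum>k\<in>{1..<m-1}. v (Suc k) - v k) + (\<Sum>k\<in>{1..<m-1}. v k - v (k-1))"
    by (simp add: sum.distrib[symmetric])
  also have "(\<Sum>k\<in>{1..<m-1}. v (Suc k) - v k) = v (m-1) - v 1"
  proof -
    have "(\<Sum>k\<in>{1..<m-1}. v (Suc k) - v k) = (\<Sum>k = 1..m-2. v (Suc k) - v k)"
      using assms by (intro sum.cong) auto
    also have "\<dots> = v (Suc (m-2)) - v 1" using assms by (intro sum_Suc_diff) auto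
    finally show ?thesis using assms by (simp add: Suc_diff_Suc numeral_2_eq_2)
  qed
  also have "(\<Sum>k\<in>{1..<m-1}. v k - v (k-1)) = (\<Sum>k\<in>{0..<m-2}. v (Suc k) - v k)"
  proof -
    have "(\<Sum>k\<in>{1..<m-1}. v k - v (k-1)) = (\<Sum>k\<in>Suc ` {0..<m-2}. v k - v (k-1))"
      using assms by (intro sum.cong) (auto simp: image_Suc_atLeastLessThan)
    also have "\<dots> = (\<Sum>k\<in>{0..<m-2}. v (Suc k) - v k)" by (subst sum.reindex) auto
    finally show ?thesis .
  qed
  also have "\<dots> = v (m-2) - v 0"
    using sum_lessThan_telescope[of v "m-2"] by (simp add: atLeast0LessThan)
  finally have eq: "(\<Sum>k\<in>{1..<m-1}. v (k+1) - v (k-1)) = v (m-1) - v 1 + (v (m-2) - v 0)" .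
  have "v 0 \<le> v 1" using assms by (intro monovD) auto
  moreover have "v (m-2) \<le> v (m-1)" using assms by (intro monovD) auto
  moreover have "v 1 \<le> v (m-1)" using assms by (intro monovD) auto
  moreover have "v 0 \<le> v (m-2)" using assms by (intro monovD) auto
  ultimately show ?thesis unfolding eq by (rule aux4)
qed


definition LL :: "(pop \<Rightarrow> nat \<Rightarrow> nat set \<Rightarrow> nat list) \<Rightarrow> pop \<Rightarrow> nat \<Rightarrow> nat list" where
  "LL tb R j = tb R j {..<length R}"

definition vv :: "nat \<Rightarrow> (pop \<Rightarrow> nat \<Rightarrow> nat set \<Rightarrow> nat list) \<Rightarrow> pop \<Rightarrow> nat \<Rightarrow> nat \<Rightarrow> real" where
  "vv n tb R j p = real (omm n j (R ! (LL tb R j ! p)))"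

definition kk :: "(pop \<Rightarrow> nat \<Rightarrow> nat set \<Rightarrow> nat list) \<Rightarrow> pop \<Rightarrow> nat \<Rightarrow> nat \<Rightarrow> nat" where
  "kk tb R j y = (THE k. k < length (LL tb R j) \<and> LL tb R j ! k = y)"

lemma LL_props:
  assumes "valid_tb n tb"
  shows "distinct (LL tb R j)" "set (LL tb R j) = {..<length R}" "length (LL tb R j) = length R"
    "sorted (map (\<lambda>i. omm n j (R!i)) (LL tb R j))"
proof -
  have h: "distinct (LL tb R j) \<and> set (LL tb R j) = {..<length R} \<and> sorted (map (\<lambda>i. omm n j (R!i)) (LL tb R j))"
    using assms unfolding valid_tb_def LL_def by blast
  thus "distinct (LL tb R j)" "set (LL tb R j) = {..<length R}" "sorted (map (\<lambda>i. omm n j (R!i)) (LL tb R j))"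
    by auto
  show "length (LL tb R j) = length R" using h distinct_card[of "LL tb R j"] by simp
qed

lemma vv_mono: assumes "valid_tb n tb" shows "monov (vv n tb R j) (length R)"
  unfolding monov_def
proof (intro allI impI)
  fix p q assume pq: "p \<le> q" "q < length R"
  have s: "sorted (map (\<lambda>i. omm n j (R!i)) (LL tb R j))" and l: "length (LL tb R j) = length R"
    using LL_props[OF assms] by auto
  have "map (\<lambda>i. omm n j (R!i)) (LL tb R j) ! p \<le> map (\<lambda>i. omm n j (R!i)) (LL tb R j) ! q"
    using s pq l by (intro sorted_nth_mono) auto
  thus "vv n tb R j p \<le> vv n tb R j q" using pq l by (simp add: vv_def)
qed

lemma kk_props: assumes "valid_tb n tb" "y < length R"
  shows "kk tb R j y < length R" "LL tb R j ! kk tb R j y = y"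
proof -
  have d: "distinct (LL tb R j)" and s: "set (LL tb R j) = {..<length R}" and l: "length (LL tb R j) = length R"
    using LL_props[OF assms(1)] by auto
  obtain k where k: "k < length (LL tb R j)" "LL tb R j ! k = y" using s assms(2)
    by (metis in_set_conv_nth lessThan_iff)
  have "kk tb R j y = k" unfolding kk_def
  proof (rule the_equality)
    show "k < length (LL tb R j) \<and> LL tb R j ! k = y" using k by simp
    fix k' assume "k' < length (LL tb R j) \<and> LL tb R j ! k' = y"
    thus "k' = k" using k d nth_eq_iff_index_eq by metis
  qed
  thus "kk tb R j y < length R" "LL tb R j ! kk tb R j y = y" using k l by auto
qed

lemma kk_nth: assumes "valid_tb n tb" "k < length R"
  shows "kk tb R j (LL tb R j ! k) = k"
proof -
  have d: "distinct (LL tb R j)" and l: "length (LL tb R j) = length R"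
    using LL_props[OF assms(1)] by auto
  show ?thesis unfolding kk_def
    by (rule the_equality) (use assms d l in \<open>auto simp: nth_eq_iff_index_eq\<close>)
qed

lemma LL_nth_less: assumes "valid_tb n tb" "k < length R" shows "LL tb R j ! k < length R"
proof -
  have "LL tb R j ! k \<in> set (LL tb R j)" using assms LL_props(3)[OF assms(1), of R j] by (intro nth_mem) simp
  thus ?thesis using LL_props(2)[OF assms(1), of R j] by auto
qed

lemma cd_comp_eq: assumes "valid_tb n tb" "y < length R"
  shows "cd_comp n tb R {..<length R} j y = cdv (vv n tb R j) (length R) (kk tb R j y)"
  using LL_props(3)[OF assms(1), of R j]
  unfolding cd_comp_def cdv_def Let_def vv_def kk_def LL_def by simp

lemma cd_comp_nonneg: assumes "valid_tb n tb" "y < length R"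
  shows "cd_comp n tb R {..<length R} j y \<ge> 0"
  using cd_comp_eq[OF assms] cdv_nonneg[OF vv_mono[OF assms(1)] kk_props(1)[OF assms]] by simp

lemma cdis_nonneg: assumes "valid_tb n tb" "y < length R"
  shows "cdis n tb R {..<length R} y \<ge> 0"
  using cd_comp_nonneg[OF assms, of 1] cd_comp_nonneg[OF assms, of 2] unfolding cdis_def by simp

definition validpop :: "nat \<Rightarrow> pop \<Rightarrow> bool" where
  "validpop n R \<longleftrightarrow> (\<forall>x\<in>set R. length x = n)"

lemma ones_le: "length x = n \<Longrightarrow> ones x \<le> n"
  unfolding ones_def by (metis length_filter_le)

lemma vv_range: assumes "valid_tb n tb" "validpop n R" "p < length R"
  shows "vv n tb R j p \<in> real ` {0..n}"
proof -
  have "LL tb R j ! p < length R" using LL_nth_less[OF assms(1,3)] .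
  hence "length (R ! (LL tb R j ! p)) = n" using assms(2) unfolding validpop_def by auto
  hence "ones (R ! (LL tb R j ! p)) \<le> n" by (rule ones_le)
  thus ?thesis unfolding vv_def omm_def by auto
qed

lemma card_cdpos_j: assumes "valid_tb n tb" "validpop n R"
  shows "card {y. y < length R \<and> cd_comp n tb R {..<length R} j y > 0} \<le> 2 * (n+1)"
proof -
  let ?m = "length R" and ?L = "LL tb R j"
  have "{y. y < ?m \<and> cd_comp n tb R {..<?m} j y > 0} \<subseteq> (\<lambda>k. ?L ! k) ` {k. k < ?m \<and> cdv (vv n tb R j) ?m k > 0}"
  proof
    fix y assume y: "y \<in> {y. y < ?m \<and> cd_comp n tb R {..<?m} j y > 0}"
    hence "kk tb R j y \<in> {k. k < ?m \<and> cdv (vv n tb R j) ?m k > 0}"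
      using cd_comp_eq[OF assms(1), of y R j] kk_props[OF assms(1), of y R j] by auto
    hence "?L ! kk tb R j y \<in> (\<lambda>k. ?L ! k) ` {k. k < ?m \<and> cdv (vv n tb R j) ?m k > 0}"
      by (rule imageI)
    thus "y \<in> (\<lambda>k. ?L ! k) ` {k. k < ?m \<and> cdv (vv n tb R j) ?m k > 0}"
      using kk_props(2)[OF assms(1), of y R j] y by simp
  qed
  hence "card {y. y < ?m \<and> cd_comp n tb R {..<?m} j y > 0} \<le> card ((\<lambda>k. ?L ! k) ` {k. k < ?m \<and> cdv (vv n tb R j) ?m k > 0})"
    by (intro card_mono) auto
  also have "\<dots> \<le> card {k. k < ?m \<and> cdv (vv n tb R j) ?m k > 0}" by (rule card_image_le) simp
  also have "\<dots> \<le> 2 * card (real ` {0..n})"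
    by (rule card_cdv_pos[OF vv_mono[OF assms(1)]]) (use vv_range[OF assms] in auto)
  also have "\<dots> \<le> 2 * (n+1)" using card_image_le[of "{0..n}" real] by simp
  finally show ?thesis .
qed

lemma ereal_add_pos: "(a::ereal) \<ge> 0 \<Longrightarrow> b \<ge> 0 \<Longrightarrow> a + b > 0 \<Longrightarrow> a > 0 \<or> b > 0"
  by (metis add.right_neutral antisym_conv2 add_0)

lemma card_cdis_pos: assumes "valid_tb n tb" "validpop n R"
  shows "card {y. y < length R \<and> cdis n tb R {..<length R} y > 0} \<le> 4 * (n+1)"
proof -
  let ?m = "length R"
  have "{y. y < ?m \<and> cdis n tb R {..<?m} y > 0} \<subseteq> {y. y < ?m \<and> cd_comp n tb R {..<?m} 1 y > 0} \<union> {y. y < ?m \<and> cd_comp n tb R {..<?m} 2 y > 0}"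
    using ereal_add_pos cd_comp_nonneg[OF assms(1)] unfolding cdis_def by blast
  hence "card {y. y < ?m \<and> cdis n tb R {..<?m} y > 0} \<le> card ({y. y < ?m \<and> cd_comp n tb R {..<?m} 1 y > 0} \<union> {y. y < ?m \<and> cd_comp n tb R {..<?m} 2 y > 0})"
    by (intro card_mono) auto
  also have "\<dots> \<le> card {y. y < ?m \<and> cd_comp n tb R {..<?m} 1 y > 0} + card {y. y < ?m \<and> cd_comp n tb R {..<?m} 2 y > 0}"
    by (rule card_Un_le)
  finally show ?thesis using card_cdpos_j[OF assms, of 1] card_cdpos_j[OF assms, of 2] by simp
qed

lemma omm2: "omm n 2 x = ones x" by (simp add: omm_def)
lemma omm1: "omm n 1 x = n - ones x" by (simp add: omm_def)

lemma exists_pos_rep: assumes "valid_tb n tb" "i < length R"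
  shows "\<exists>i'<length R. ones (R!i') = ones (R!i) \<and> cdis n tb R {..<length R} i' > 0"
proof -
  let ?m = "length R" and ?L = "LL tb R 2" and ?v = "vv n tb R 2"
  have k: "kk tb R 2 i < ?m" "?L ! kk tb R 2 i = i" using kk_props[OF assms] by auto
  obtain p where p: "p < ?m" "?v p = ?v (kk tb R 2 i)" "p = 0 \<or> ?v (p-1) < ?v p"
    using exists_first[OF vv_mono[OF assms(1)] k(1)] by blast
  have pos: "cdv ?v ?m p > 0" using cdv_first_pos[OF vv_mono[OF assms(1)] p(1,3)] .
  define i' where "i' = ?L ! p"
  have i': "i' < ?m" unfolding i'_def using LL_nth_less[OF assms(1) p(1)] .
  have kk': "kk tb R 2 i' = p" unfolding i'_def using kk_nth[OF assms(1) p(1)] .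
  have c2: "cd_comp n tb R {..<?m} 2 i' > 0" using cd_comp_eq[OF assms(1) i', of 2] kk' pos by simp
  have c1: "cd_comp n tb R {..<?m} 1 i' \<ge> 0" using cd_comp_nonneg[OF assms(1) i'] .
  have "cdis n tb R {..<?m} i' > 0" unfolding cdis_def using c1 c2
    by (metis add_nonneg_pos)
  moreover have "ones (R!i') = ones (R!i)" using p(2) k(2) unfolding vv_def i'_def by (simp add: omm2)
  ultimately show ?thesis using i' by blast
qed


lemma exists_last: assumes "monov v m" "k < m"
  shows "\<exists>p<m. v p = v k \<and> (p = m - 1 \<or> v p < v (p+1))"
proof -
  define p where "p = (GREATEST p. p < m \<and> v p = v k)"
  have bnd: "\<forall>y. y < m \<and> v y = v k \<longrightarrow> y \<le> m" by auto
  have pp: "p < m \<and> v p = v k" unfolding p_def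
    by (rule GreatestI_nat[where b=m]) (use assms in auto)
  have kp: "k \<le> p" unfolding p_def
    by (rule Greatest_le_nat[where b=m]) (use assms in auto)
  have "p = m - 1 \<or> v p < v (p+1)"
  proof (cases "p = m - 1")
    case False
    hence p1: "p + 1 < m" using pp by auto
    have gle: "y \<le> p" if "y < m" "v y = v k" for y unfolding p_def
      by (rule Greatest_le_nat[where b=m]) (use that in auto)
    have "v (p+1) \<noteq> v k" using gle[of "p+1"] p1 by auto
    moreover have "v p \<le> v (p+1)" using p1 assms by (intro monovD) auto
    ultimately show ?thesis using pp by auto
  qed simp
  thus ?thesis using pp by blast
qed

lemma cdv_big: assumes "monov v m" "p < m" "p = 0 \<or> p = m - 1 \<or> v (p+1) - v (p-1) \<ge> 2"
  shows "cdv v m p = \<infinity> \<or> (v (m-1) - v 0 > 0 \<and> cdv v m p \<ge> ereal (2 / (v (m-1) - v 0)))"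
proof (cases "p = 0 \<or> p = m - 1")
  case True thus ?thesis by (simp add: cdv_def)
next
  case False
  hence h: "p \<noteq> 0" "p \<noteq> m - 1" "v (p+1) - v (p-1) \<ge> 2" using assms by auto
  have a1: "v (p+1) \<le> v (m-1)" using h assms by (intro monovD) auto
  have a2: "v 0 \<le> v (p-1)" using h assms by (intro monovD) auto
  have D: "v (m-1) - v 0 \<ge> v (p+1) - v (p-1)" using a1 a2 by simp
  hence Dp: "v (m-1) - v 0 > 0" using h by simp
  have "2 / (v (m-1) - v 0) \<le> (v (p+1) - v (p-1)) / (v (m-1) - v 0)"
    using Dp h by (intro divide_right_mono) auto
  thus ?thesis using h Dp unfolding cdv_def by auto
qed

lemma vv_kk: assumes "valid_tb n tb" "y < length R"
  shows "vv n tb R j (kk tb R j y) = real (omm n j (R!y))"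
  using kk_props(2)[OF assms] unfolding vv_def by simp

lemma nat_gap: "(a::nat) < b \<Longrightarrow> b \<noteq> a + 1 \<Longrightarrow> real b - real a \<ge> 2" by linarith

lemma good_up: assumes tb: "valid_tb n tb" and i: "i < length R" and a: "ones (R!i) = a"
    and miss: "\<forall>y<length R. ones (R!y) \<noteq> a + 1"
  shows "\<exists>x<length R. ones (R!x) = a \<and>
     (cd_comp n tb R {..<length R} 2 x = \<infinity> \<or>
      (vv n tb R 2 (length R - 1) - vv n tb R 2 0 > 0 \<and>
       cd_comp n tb R {..<length R} 2 x \<ge> ereal (2 / (vv n tb R 2 (length R - 1) - vv n tb R 2 0))))"
proof -
  let ?m = "length R" and ?L = "LL tb R 2" and ?v = "vv n tb R 2"
  note mono = vv_mono[OF tb, of R 2]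
  have k: "kk tb R 2 i < ?m" using kk_props[OF tb i] by auto
  obtain p where p: "p < ?m" "?v p = ?v (kk tb R 2 i)" "p = ?m - 1 \<or> ?v p < ?v (p+1)"
    using exists_last[OF mono k] by blast
  have vp: "?v p = real a" using p(2) vv_kk[OF tb i, of 2] a by (simp add: omm2)
  have cond: "p = 0 \<or> p = ?m - 1 \<or> ?v (p+1) - ?v (p-1) \<ge> 2"
  proof (cases "p = 0 \<or> p = ?m - 1")
    case False
    hence p1: "p + 1 < ?m" "p \<noteq> 0" using p by auto
    have "?v (p-1) \<le> ?v p" using p1 by (intro monovD[OF mono]) auto
    moreover have "?v p < ?v (p+1)" using p False by auto
    moreover have "LL tb R 2 ! (p+1) < ?m" using LL_nth_less[OF tb p1(1)] .
    hence "ones (R ! (?L ! (p+1))) \<noteq> a + 1" using miss by blast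
    ultimately have "?v (p+1) - ?v p \<ge> 2" using vp unfolding vv_def omm2
      by (intro nat_gap) auto
    thus ?thesis using \<open>?v (p-1) \<le> ?v p\<close> by simp
  qed blast
  define x where "x = ?L ! p"
  have x: "x < ?m" unfolding x_def using LL_nth_less[OF tb p(1)] .
  have kx: "kk tb R 2 x = p" unfolding x_def using kk_nth[OF tb p(1)] .
  have ox: "ones (R!x) = a" using vp unfolding x_def vv_def omm2 by simp
  show ?thesis using cdv_big[OF mono p(1) cond] cd_comp_eq[OF tb x, of 2] kx ox x by auto
qed

lemma good_down: assumes tb: "valid_tb n tb" and i: "i < length R" and a: "ones (R!i) = a"
    and a0: "a \<ge> 1" and miss: "\<forall>y<length R. ones (R!y) \<noteq> a - 1"
  shows "\<exists>x<length R. ones (R!x) = a \<and>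
     (cd_comp n tb R {..<length R} 2 x = \<infinity> \<or>
      (vv n tb R 2 (length R - 1) - vv n tb R 2 0 > 0 \<and>
       cd_comp n tb R {..<length R} 2 x \<ge> ereal (2 / (vv n tb R 2 (length R - 1) - vv n tb R 2 0))))"
proof -
  let ?m = "length R" and ?L = "LL tb R 2" and ?v = "vv n tb R 2"
  note mono = vv_mono[OF tb, of R 2]
  have k: "kk tb R 2 i < ?m" using kk_props[OF tb i] by auto
  obtain p where p: "p < ?m" "?v p = ?v (kk tb R 2 i)" "p = 0 \<or> ?v (p-1) < ?v p"
    using exists_first[OF mono k] by blast
  have vp: "?v p = real a" using p(2) vv_kk[OF tb i, of 2] a by (simp add: omm2)
  have cond: "p = 0 \<or> p = ?m - 1 \<or> ?v (p+1) - ?v (p-1) \<ge> 2"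
  proof (cases "p = 0 \<or> p = ?m - 1")
    case False
    hence p1: "p + 1 < ?m" "p \<noteq> 0" using p by auto
    have "?v p \<le> ?v (p+1)" using p1 by (intro monovD[OF mono]) auto
    moreover have "?v (p-1) < ?v p" using p False by auto
    moreover have "LL tb R 2 ! (p-1) < ?m" using LL_nth_less[OF tb, of "p-1"] p1 by simp
    hence "ones (R ! (?L ! (p-1))) \<noteq> a - 1" using miss by blast
    hence "ones (R ! (?L ! (p-1))) + 1 \<noteq> a" using a0 by auto
    ultimately have "?v p - ?v (p-1) \<ge> 2" using vp unfolding vv_def omm2
      by (intro nat_gap) auto
    thus ?thesis using \<open>?v p \<le> ?v (p+1)\<close> by simp
  qed blast
  define x where "x = ?L ! p"
  have x: "x < ?m" unfolding x_def using LL_nth_less[OF tb p(1)] .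
  have kx: "kk tb R 2 x = p" unfolding x_def using kk_nth[OF tb p(1)] .
  have ox: "ones (R!x) = a" using vp unfolding x_def vv_def omm2 by simp
  show ?thesis using cdv_big[OF mono p(1) cond] cd_comp_eq[OF tb x, of 2] kx ox x by auto
qed


lemma cdv_inf: "cdv v m k = \<infinity> \<Longrightarrow> k = 0 \<or> k = m - 1"
  unfolding cdv_def by (auto split: if_splits)

lemma card_inf_j: assumes tb: "valid_tb n tb"
  shows "card {y. y < length R \<and> cd_comp n tb R {..<length R} j y = \<infinity>} \<le> 2"
proof -
  let ?m = "length R" and ?L = "LL tb R j"
  have "{y. y < ?m \<and> cd_comp n tb R {..<?m} j y = \<infinity>} \<subseteq> (\<lambda>k. ?L ! k) ` {0, ?m - 1}"
  proof
    fix y assume y: "y \<in> {y. y < ?m \<and> cd_comp n tb R {..<?m} j y = \<infinity>}"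
    hence "kk tb R j y \<in> {0, ?m - 1}" using cd_comp_eq[OF tb, of y R j] cdv_inf[of "vv n tb R j" ?m "kk tb R j y"] by auto
    hence "?L ! kk tb R j y \<in> (\<lambda>k. ?L ! k) ` {0, ?m - 1}" by (rule imageI)
    thus "y \<in> (\<lambda>k. ?L ! k) ` {0, ?m - 1}" using kk_props(2)[OF tb, of y R j] y by simp
  qed
  hence "card {y. y < ?m \<and> cd_comp n tb R {..<?m} j y = \<infinity>} \<le> card ((\<lambda>k. ?L ! k) ` {0, ?m - 1})"
    by (intro card_mono) auto
  also have "\<dots> \<le> card {0, ?m - 1}" by (rule card_image_le) simp
  also have "\<dots> \<le> 2" by (simp add: card_insert_le_m1)
  finally show ?thesis .
qed

lemma ereal_sum_inf: "(a::ereal) \<ge> 0 \<Longrightarrow> b \<ge> 0 \<Longrightarrow> a + b = \<infinity> \<Longrightarrow> a = \<infinity> \<or> b = \<infinity>"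
  by (cases a; cases b) auto

lemma card_inf: assumes tb: "valid_tb n tb"
  shows "card {y. y < length R \<and> cdis n tb R {..<length R} y = \<infinity>} \<le> 4"
proof -
  let ?m = "length R"
  have "{y. y < ?m \<and> cdis n tb R {..<?m} y = \<infinity>} \<subseteq> {y. y < ?m \<and> cd_comp n tb R {..<?m} 1 y = \<infinity>} \<union> {y. y < ?m \<and> cd_comp n tb R {..<?m} 2 y = \<infinity>}"
    using ereal_sum_inf cd_comp_nonneg[OF tb] unfolding cdis_def by blast
  hence "card {y. y < ?m \<and> cdis n tb R {..<?m} y = \<infinity>} \<le> card ({y. y < ?m \<and> cd_comp n tb R {..<?m} 1 y = \<infinity>} \<union> {y. y < ?m \<and> cd_comp n tb R {..<?m} 2 y = \<infinity>})"
    by (intro card_mono) auto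
  also have "\<dots> \<le> card {y. y < ?m \<and> cd_comp n tb R {..<?m} 1 y = \<infinity>} + card {y. y < ?m \<and> cd_comp n tb R {..<?m} 2 y = \<infinity>}"
    by (rule card_Un_le)
  finally show ?thesis using card_inf_j[OF tb, of R 1] card_inf_j[OF tb, of R 2] by simp
qed

lemma min_ones: assumes tb: "valid_tb n tb" and vp: "validpop n R" and m: "length R > 0"
  shows "ones (R ! (LL tb R 1 ! (length R - 1))) = ones (R ! (LL tb R 2 ! 0))"
    "ones (R ! (LL tb R 1 ! 0)) = ones (R ! (LL tb R 2 ! (length R - 1)))"
proof -
  let ?m = "length R"
  have len: "ones (R!y) \<le> n" if "y < ?m" for y
  proof -
    have "length (R!y) = n" using vp that unfolding validpop_def by auto
    thus ?thesis by (rule ones_le)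
  qed
  have l1: "ones (R ! (LL tb R 1 ! (?m - 1))) \<le> ones (R!y)" if y: "y < ?m" for y
  proof -
    have "vv n tb R 1 (kk tb R 1 y) \<le> vv n tb R 1 (?m - 1)"
      using kk_props[OF tb y, of 1] by (intro monovD[OF vv_mono[OF tb]]) auto
    hence "real (n - ones (R!y)) \<le> real (n - ones (R ! (LL tb R 1 ! (?m - 1))))"
      using vv_kk[OF tb y, of 1] unfolding vv_def omm1 by simp
    moreover have "LL tb R 1 ! (?m - 1) < ?m" using LL_nth_less[OF tb, of "?m - 1" R 1] m by simp
    ultimately show ?thesis using len[of y] len[of "LL tb R 1 ! (?m - 1)"] y by linarith
  qed
  have l2: "ones (R ! (LL tb R 2 ! 0)) \<le> ones (R!y)" if y: "y < ?m" for y
  proof -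
    have "vv n tb R 2 0 \<le> vv n tb R 2 (kk tb R 2 y)"
      using kk_props[OF tb y, of 2] by (intro monovD[OF vv_mono[OF tb]]) auto
    thus ?thesis using vv_kk[OF tb y, of 2] unfolding vv_def omm2 by simp
  qed
  have u1: "ones (R!y) \<le> ones (R ! (LL tb R 1 ! 0))" if y: "y < ?m" for y
  proof -
    have "vv n tb R 1 0 \<le> vv n tb R 1 (kk tb R 1 y)"
      using kk_props[OF tb y, of 1] by (intro monovD[OF vv_mono[OF tb]]) auto
    hence "real (n - ones (R ! (LL tb R 1 ! 0))) \<le> real (n - ones (R!y))"
      using vv_kk[OF tb y, of 1] unfolding vv_def omm1 by simp
    moreover have "LL tb R 1 ! 0 < ?m" using LL_nth_less[OF tb, of 0 R 1] m by simp
    ultimately show ?thesis using len[of y] len[of "LL tb R 1 ! 0"] y by linarith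
  qed
  have u2: "ones (R!y) \<le> ones (R ! (LL tb R 2 ! (?m - 1)))" if y: "y < ?m" for y
  proof -
    have "vv n tb R 2 (kk tb R 2 y) \<le> vv n tb R 2 (?m - 1)"
      using kk_props[OF tb y, of 2] by (intro monovD[OF vv_mono[OF tb]]) auto
    thus ?thesis using vv_kk[OF tb y, of 2] unfolding vv_def omm2 by simp
  qed
  have a: "LL tb R 1 ! (?m - 1) < ?m" "LL tb R 2 ! 0 < ?m" "LL tb R 1 ! 0 < ?m" "LL tb R 2 ! (?m - 1) < ?m"
    using LL_nth_less[OF tb, of "?m - 1" R 1] LL_nth_less[OF tb, of 0 R 2]
      LL_nth_less[OF tb, of 0 R 1] LL_nth_less[OF tb, of "?m - 1" R 2] m by auto
  show "ones (R ! (LL tb R 1 ! (?m - 1))) = ones (R ! (LL tb R 2 ! 0))"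
    using l1[OF a(2)] l2[OF a(1)] by simp
  show "ones (R ! (LL tb R 1 ! 0)) = ones (R ! (LL tb R 2 ! (?m - 1)))"
    using u1[OF a(4)] u2[OF a(3)] by simp
qed

lemma range_eq: assumes tb: "valid_tb n tb" and vp: "validpop n R" and m: "length R > 0"
  shows "vv n tb R 1 (length R - 1) - vv n tb R 1 0 = vv n tb R 2 (length R - 1) - vv n tb R 2 0"
proof -
  let ?m = "length R"
  have len: "ones (R!y) \<le> n" if "y < ?m" for y
  proof -
    have "length (R!y) = n" using vp that unfolding validpop_def by auto
    thus ?thesis by (rule ones_le)
  qed
  have a: "LL tb R 1 ! (?m - 1) < ?m" "LL tb R 1 ! 0 < ?m"
    using LL_nth_less[OF tb, of "?m - 1" R 1] LL_nth_less[OF tb, of 0 R 1] m by auto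
  show ?thesis using min_ones[OF assms] len[OF a(1)] len[OF a(2)]
    unfolding vv_def omm1 omm2 by (simp add: of_nat_diff)
qed

definition gg :: "nat \<Rightarrow> (pop \<Rightarrow> nat \<Rightarrow> nat set \<Rightarrow> nat list) \<Rightarrow> pop \<Rightarrow> nat \<Rightarrow> nat \<Rightarrow> real" where
  "gg n tb R j k = (if k = 0 \<or> k = length R - 1 then 0 else vv n tb R j (k+1) - vv n tb R j (k-1))"

lemma gg_nonneg: assumes tb: "valid_tb n tb" "k < length R" shows "gg n tb R j k \<ge> 0"
proof (cases "k = 0 \<or> k = length R - 1")
  case False
  have "vv n tb R j (k-1) \<le> vv n tb R j (k+1)" using False assms
    by (intro monovD[OF vv_mono[OF tb(1)]]) auto
  thus ?thesis using False unfolding gg_def by simp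
qed (auto simp: gg_def)

lemma gg_sum: assumes tb: "valid_tb n tb" and m: "length R \<ge> 2"
  shows "(\<Sum>y<length R. gg n tb R j (kk tb R j y)) \<le> 2 * (vv n tb R j (length R - 1) - vv n tb R j 0)"
proof -
  let ?m = "length R"
  have "(\<Sum>y<?m. gg n tb R j (kk tb R j y)) = (\<Sum>k<?m. gg n tb R j k)"
  proof (rule sum.reindex_bij_witness[where i="\<lambda>k. LL tb R j ! k" and j="kk tb R j"])
    fix a assume "a \<in> {..<?m}" thus "LL tb R j ! kk tb R j a = a" "kk tb R j a \<in> {..<?m}"
      using kk_props[OF tb, of a R j] by auto
  next
    fix b assume "b \<in> {..<?m}" thus "kk tb R j (LL tb R j ! b) = b" "LL tb R j ! b \<in> {..<?m}"
      using kk_nth[OF tb, of b R j] LL_nth_less[OF tb, of b R j] by auto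
  qed simp
  also have "\<dots> = (\<Sum>k\<in>{1..<?m-1}. gg n tb R j k)"
    by (rule sum.mono_neutral_right) (auto simp: gg_def)
  also have "\<dots> = (\<Sum>k\<in>{1..<?m-1}. vv n tb R j (k+1) - vv n tb R j (k-1))"
    by (rule sum.cong) (auto simp: gg_def)
  also have "\<dots> \<le> 2 * (vv n tb R j (?m - 1) - vv n tb R j 0)"
    by (rule cdv_sum[OF vv_mono[OF tb] m])
  finally show ?thesis .
qed

lemma cd_comp_fin: assumes tb: "valid_tb n tb" and y: "y < length R"
    and D: "vv n tb R j (length R - 1) - vv n tb R j 0 > 0"
    and fin: "cd_comp n tb R {..<length R} j y \<noteq> \<infinity>"
  shows "cd_comp n tb R {..<length R} j y = ereal (gg n tb R j (kk tb R j y) / (vv n tb R j (length R - 1) - vv n tb R j 0))"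
  using fin D unfolding cd_comp_eq[OF tb y] cdv_def gg_def by (auto split: if_splits)

lemma card_big: assumes tb: "valid_tb n tb" and vp: "validpop n R"
    and D: "vv n tb R 2 (length R - 1) - vv n tb R 2 0 > 0"
  shows "real (card {y. y < length R \<and> cdis n tb R {..<length R} y \<ge> ereal (2 / (vv n tb R 2 (length R - 1) - vv n tb R 2 0))})
     \<le> 2 * (vv n tb R 2 (length R - 1) - vv n tb R 2 0) + 4"
proof -
  let ?m = "length R" and ?D = "vv n tb R 2 (length R - 1) - vv n tb R 2 0"
  let ?c = "cdis n tb R {..<length R}"
  let ?g = "\<lambda>y. gg n tb R 1 (kk tb R 1 y) + gg n tb R 2 (kk tb R 2 y)"
  have m0: "?m > 0" using D by (cases "length R") auto
  have m2: "?m \<ge> 2" proof (rule ccontr)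
    assume "\<not> ?m \<ge> 2" hence "?m = 1" using m0 by linarith
    thus False using D by simp qed
  have D1: "vv n tb R 1 (length R - 1) - vv n tb R 1 0 = ?D" using range_eq[OF tb vp m0] .
  define Big where "Big = {y. y < ?m \<and> ?c y \<ge> ereal (2 / ?D)}"
  define Inf where "Inf = {y. y < ?m \<and> ?c y = \<infinity>}"
  define Fin where "Fin = {y. y < ?m \<and> ?c y \<ge> ereal (2 / ?D) \<and> ?c y \<noteq> \<infinity>}"
  have BI: "Big \<subseteq> Inf \<union> Fin" unfolding Big_def Inf_def Fin_def by auto
  have gFin: "?g y \<ge> 2" if y: "y \<in> Fin" for y
  proof -
    have yl: "y < ?m" and cy: "?c y \<ge> ereal (2 / ?D)" "?c y \<noteq> \<infinity>" using y unfolding Fin_def by auto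
    have f1: "cd_comp n tb R {..<?m} 1 y \<noteq> \<infinity>" and f2: "cd_comp n tb R {..<?m} 2 y \<noteq> \<infinity>"
      using cy(2) cd_comp_nonneg[OF tb yl, of 1] cd_comp_nonneg[OF tb yl, of 2] unfolding cdis_def
      by auto
    have "?c y = ereal (gg n tb R 1 (kk tb R 1 y) / ?D) + ereal (gg n tb R 2 (kk tb R 2 y) / ?D)"
      unfolding cdis_def using cd_comp_fin[OF tb yl _ f1] cd_comp_fin[OF tb yl _ f2] D D1 by simp
    also have "\<dots> = ereal (?g y / ?D)" by (simp add: add_divide_distrib)
    finally have "2 / ?D \<le> ?g y / ?D" using cy(1) by simp
    thus ?thesis using D divide_le_cancel[of 2 ?D "?g y"] by simp
  qed
  have "2 * real (card Fin) = (\<Sum>y\<in>Fin. 2)" by simp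
  also have "\<dots> \<le> (\<Sum>y\<in>Fin. ?g y)" by (rule sum_mono) (use gFin in auto)
  also have "\<dots> \<le> (\<Sum>y<?m. ?g y)"
    by (rule sum_mono2) (auto simp: Fin_def intro!: add_nonneg_nonneg gg_nonneg[OF tb] kk_props[OF tb])
  also have "\<dots> = (\<Sum>y<?m. gg n tb R 1 (kk tb R 1 y)) + (\<Sum>y<?m. gg n tb R 2 (kk tb R 2 y))"
    by (rule sum.distrib)
  also have "\<dots> \<le> 2 * ?D + 2 * ?D" using gg_sum[OF tb m2, of 1] gg_sum[OF tb m2, of 2] D1 by simp
  finally have cF: "real (card Fin) \<le> 2 * ?D" by simp
  have cI: "card Inf \<le> 4" unfolding Inf_def by (rule card_inf[OF tb])
  have "card Big \<le> card (Inf \<union> Fin)" by (intro card_mono BI) (auto simp: Inf_def Fin_def)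
  also have "\<dots> \<le> card Inf + card Fin" by (rule card_Un_le)
  finally have "real (card Big) \<le> real (card Inf) + real (card Fin)" by linarith
  thus ?thesis using cF cI unfolding Big_def by linarith
qed


lemma beaters: assumes tb: "valid_tb n tb" and vp: "validpop n R" and x: "x < length R"
  and good: "cd_comp n tb R {..<length R} 2 x = \<infinity> \<or>
      (vv n tb R 2 (length R - 1) - vv n tb R 2 0 > 0 \<and>
       cd_comp n tb R {..<length R} 2 x \<ge> ereal (2 / (vv n tb R 2 (length R - 1) - vv n tb R 2 0)))"
  shows "card {y. y < length R \<and> y \<noteq> x \<and> cdis n tb R {..<length R} y \<ge> cdis n tb R {..<length R} x} \<le> 2 * n + 3"
proof -
  let ?m = "length R" and ?c = "cdis n tb R {..<length R}"
  let ?D = "vv n tb R 2 (length R - 1) - vv n tb R 2 0"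
  have cx: "?c x \<ge> cd_comp n tb R {..<length R} 2 x"
    using cd_comp_nonneg[OF tb x, of 1] unfolding cdis_def by (simp add: add_increasing)
  let ?B = "{y. y < ?m \<and> y \<noteq> x \<and> ?c y \<ge> ?c x}"
  show ?thesis
  proof (cases "cd_comp n tb R {..<length R} 2 x = \<infinity>")
    case True
    hence "?c x = \<infinity>" using cx by simp
    hence sub: "?B \<subseteq> {y. y < ?m \<and> ?c y = \<infinity>} - {x}" by auto
    have "card ?B \<le> card ({y. y < ?m \<and> ?c y = \<infinity>} - {x})" by (intro card_mono sub) auto
    also have "\<dots> = card {y. y < ?m \<and> ?c y = \<infinity>} - 1" by (rule card_Diff_singleton) (use x \<open>?c x = \<infinity>\<close> in auto)
    also have "\<dots> \<le> 3" using card_inf[OF tb, of R] by simp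
    finally show ?thesis by simp
  next
    case False
    hence D: "?D > 0" and c2: "cd_comp n tb R {..<length R} 2 x \<ge> ereal (2 / ?D)" using good by auto
    have cx2: "?c x \<ge> ereal (2 / ?D)" using cx c2 by (rule order_trans[rotated])
    let ?Big = "{y. y < ?m \<and> ?c y \<ge> ereal (2 / ?D)}"
    have sub: "?B \<subseteq> ?Big - {x}" using cx2 by (auto intro: order_trans)
    have "card ?B \<le> card (?Big - {x})" by (intro card_mono sub) auto
    also have "\<dots> = card ?Big - 1" by (rule card_Diff_singleton) (use x cx2 in auto)
    finally have cB: "real (card ?B) \<le> real (card ?Big) - 1"
      using x cx2 card_gt_0_iff[of ?Big] by (cases "card ?Big") auto
    have m0: "?m > 0" using x by arith
    have "?D \<le> n" using vv_range[OF tb vp, of "?m - 1" 2] vv_range[OF tb vp, of 0 2] m0 by auto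
    hence "real (card ?B) \<le> 2 * real n + 3" using cB card_big[OF tb vp D] by (smt (verit))
    thus ?thesis by linarith
  qed
qed

lemma strong_up: assumes tb: "valid_tb n tb" and vp: "validpop n R" and i: "i < length R"
   and miss: "\<forall>y<length R. ones (R!y) \<noteq> ones (R!i) + 1"
  shows "\<exists>x<length R. ones (R!x) = ones (R!i) \<and>
     card {y. y < length R \<and> y \<noteq> x \<and> cdis n tb R {..<length R} y \<ge> cdis n tb R {..<length R} x} \<le> 2 * n + 3"
  using good_up[OF tb i refl miss] beaters[OF tb vp] by blast

lemma strong_down: assumes tb: "valid_tb n tb" and vp: "validpop n R" and i: "i < length R"
   and a0: "ones (R!i) \<ge> 1" and miss: "\<forall>y<length R. ones (R!y) \<noteq> ones (R!i) - 1"
  shows "\<exists>x<length R. ones (R!x) = ones (R!i) \<and>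
     card {y. y < length R \<and> y \<noteq> x \<and> cdis n tb R {..<length R} y \<ge> cdis n tb R {..<length R} x} \<le> 2 * n + 3"
  using good_down[OF tb i refl a0 miss] beaters[OF tb vp] by blast

lemma no_sdom: assumes "length x = n" "length y = n" shows "\<not> sdom n x y"
  using ones_le[OF assms(1)] ones_le[OF assms(2)] unfolding sdom_def omm_def by auto

lemma front1: assumes "validpop n R" shows "front n R 1 = {..<length R}"
  using assms no_sdom unfolding front_def validpop_def by auto

lemma rank1: assumes "validpop n R" "i < length R" shows "rank n R i = 1"
  unfolding rank_def
proof (rule Least_equality)
  show "1 \<le> (1::nat) \<and> i \<in> front n R 1" using front1[OF assms(1)] assms(2) by simp
qed simp

lemma istar1: assumes "validpop n R" "N \<le> length R" "N > 0" shows "istar n R N = 1"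
  unfolding istar_def
proof (rule Least_equality)
  have "{i \<in> {..<length R}. rank n R i \<le> 1} = {..<length R}" using rank1[OF assms(1)] by auto
  thus "N \<le> card {i \<in> {..<length R}. rank n R i \<le> 1}" using assms by simp
next
  fix y assume y: "N \<le> card {i \<in> {..<length R}. rank n R i \<le> y}"
  show "1 \<le> y" proof (rule ccontr)
    assume "\<not> 1 \<le> y" hence y0: "y = 0" by simp
    have e: "{i \<in> {..<length R}. rank n R i \<le> y} = {}" using rank1[OF assms(1)] y0 by auto
    show False using y assms unfolding e by simp
  qed
qed

definition goodA :: "nat \<Rightarrow> (pop \<Rightarrow> nat \<Rightarrow> nat set \<Rightarrow> nat list) \<Rightarrow> nat \<Rightarrow> pop \<Rightarrow> nat set set" where
  "goodA n tb N R = {A. A \<subseteq> {..<length R} \<and> card A = N \<and>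
     (\<forall>a\<in>A. \<forall>b\<in>{..<length R} - A. cdis n tb R {..<length R} b \<le> cdis n tb R {..<length R} a)}"

lemma survive_eq: assumes "validpop n R" "N \<le> length R" "N > 0"
  shows "survive n tb N R = map_pmf (\<lambda>A. map (\<lambda>i. R ! i) (sorted_list_of_set A)) (pmf_of_set (goodA n tb N R))"
proof -
  have e: "{i \<in> {..<length R}. rank n R i < 1} = {}" using rank1[OF assms(1)] by auto
  show ?thesis unfolding survive_def Let_def istar1[OF assms] front1[OF assms(1)] goodA_def e
    by simp
qed

lemma exists_top: fixes g :: "'a \<Rightarrow> 'b::linorder"
  assumes "finite F" "k \<le> card F"
  shows "\<exists>A. A \<subseteq> F \<and> card A = k \<and> (\<forall>a\<in>A. \<forall>b\<in>F - A. g b \<le> g a)"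
  using assms(2)
proof (induction k)
  case 0 thus ?case by (intro exI[of _ "{}"]) auto
next
  case (Suc k)
  then obtain A where A: "A \<subseteq> F" "card A = k" "\<forall>a\<in>A. \<forall>b\<in>F - A. g b \<le> g a" by auto
  have fA: "finite A" using A(1) assms(1) finite_subset by blast
  have "card A < card F" using A Suc.prems by simp
  hence ne: "F - A \<noteq> {}" using A(1) by auto
  have fin: "finite (F - A)" using assms(1) by simp
  have "Max (g ` (F - A)) \<in> g ` (F - A)" using fin ne by (intro Max_in) auto
  then obtain c where c1: "c \<in> F - A" "g c = Max (g ` (F - A))" by auto
  have c2: "\<forall>b\<in>F - A. g b \<le> g c" using fin c1(2) by auto
  note c = c1(1) c2
  show ?case
  proof (intro exI[of _ "insert c A"] conjI ballI)
    show "insert c A \<subseteq> F" using c A by auto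
    show "card (insert c A) = Suc k" using c A fA by simp
    fix a b assume a: "a \<in> insert c A" and b: "b \<in> F - insert c A"
    show "g b \<le> g a"
    proof (cases "a = c")
      case True thus ?thesis using c b by auto
    next
      case False thus ?thesis using A a b by auto
    qed
  qed
qed

lemma goodA_ne: assumes "N \<le> length R" shows "goodA n tb N R \<noteq> {}" "finite (goodA n tb N R)"
proof -
  obtain A where "A \<subseteq> {..<length R} \<and> card A = N \<and> (\<forall>a\<in>A. \<forall>b\<in>{..<length R} - A. cdis n tb R {..<length R} b \<le> cdis n tb R {..<length R} a)"
    using exists_top[of "{..<length R}" N "cdis n tb R {..<length R}"] assms by auto
  thus "goodA n tb N R \<noteq> {}" unfolding goodA_def by blast
  have "goodA n tb N R \<subseteq> Pow {..<length R}" unfolding goodA_def by auto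
  thus "finite (goodA n tb N R)" by (rule finite_subset) simp
qed


lemma survive_props: assumes tb: "valid_tb n tb" and vp: "validpop n R" and len: "length R = 2 * N"
  and NN: "N \<ge> 4 * (n + 1)" and P': "P' \<in> set_pmf (survive n tb N R)"
  shows "validpop n P'" "length P' = N" "ones ` set R \<subseteq> ones ` set P'"
proof -
  have N0: "N > 0" using NN by simp
  have NR: "N \<le> length R" using len by simp
  obtain A where A: "A \<in> goodA n tb N R" and P'A: "P' = map (\<lambda>i. R ! i) (sorted_list_of_set A)"
    using P' unfolding survive_eq[OF vp NR N0] using goodA_ne[OF NR, of n tb] by auto
  have Asub: "A \<subseteq> {..<length R}" and cA: "card A = N"
    and Aprop: "\<forall>a\<in>A. \<forall>b\<in>{..<length R} - A. cdis n tb R {..<length R} b \<le> cdis n tb R {..<length R} a"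
    using A unfolding goodA_def by auto
  have fA: "finite A" using Asub finite_subset by blast
  show "length P' = N" using P'A cA by simp
  have setP': "set P' = (\<lambda>i. R ! i) ` A" using P'A fA by simp
  show "validpop n P'" using vp Asub unfolding validpop_def setP' by auto
  show "ones ` set R \<subseteq> ones ` set P'"
  proof
    fix w assume "w \<in> ones ` set R"
    then obtain i where i: "i < length R" "ones (R!i) = w" by (metis imageE in_set_conv_nth)
    obtain i' where i': "i' < length R" "ones (R!i') = w" "cdis n tb R {..<length R} i' > 0"
      using exists_pos_rep[OF tb i(1)] i(2) by auto
    have "i' \<in> A"
    proof (rule ccontr)
      assume nA: "i' \<notin> A"
      let ?Pos = "{y. y < length R \<and> cdis n tb R {..<length R} y > 0}"
      have "A \<subseteq> ?Pos - {i'}"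
      proof
        fix a assume a: "a \<in> A"
        have "cdis n tb R {..<length R} i' \<le> cdis n tb R {..<length R} a" using Aprop a nA i' by auto
        thus "a \<in> ?Pos - {i'}" using a nA Asub i'(3) by auto
      qed
      hence "card A \<le> card (?Pos - {i'})" by (intro card_mono) auto
      also have "\<dots> = card ?Pos - 1" by (rule card_Diff_singleton) (use i' in auto)
      finally have "N \<le> card ?Pos - 1" using cA by simp
      moreover have "card ?Pos \<le> 4 * (n+1)" by (rule card_cdis_pos[OF tb vp])
      ultimately show False using NN by arith
    qed
    hence "R ! i' \<in> set P'" unfolding setP' by auto
    thus "w \<in> ones ` set P'" using i' by auto
  qed
qed

lemma covers_iff: assumes "validpop n P"
  shows "covers_front n P \<longleftrightarrow> {0..n} \<subseteq> ones ` set P"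
proof
  assume c: "covers_front n P"
  show "{0..n} \<subseteq> ones ` set P"
  proof
    fix w assume w: "w \<in> {0..n}"
    have "(n - w, n - (n - w)) \<in> pareto_front n" unfolding pareto_front_def by auto
    then obtain x where x: "x \<in> set P" "fval n x = (n - w, n - (n - w))"
      using c unfolding covers_front_def by auto
    hence "ones x = w" using w unfolding fval_def omm_def by auto
    thus "w \<in> ones ` set P" using x by auto
  qed
next
  assume c: "{0..n} \<subseteq> ones ` set P"
  show "covers_front n P" unfolding covers_front_def
  proof
    fix q assume "q \<in> pareto_front n"
    then obtain k where k: "q = (k, n - k)" "k \<le> n" unfolding pareto_front_def by auto
    then obtain x where x: "x \<in> set P" "ones x = n - k" using c by (metis atLeastAtMost_iff image_iff le0 diff_le_self subsetD)
    have "fval n x = (k, n - k)" using x k unfolding fval_def omm_def by auto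
    hence "(k, n - k) \<in> fval n ` set P" using x(1) by (metis image_eqI)
    thus "q \<in> fval n ` set P" using k by simp
  qed
qed

lemma set_bitwise_mut: "y \<in> set_pmf (bitwise_mut n x) \<Longrightarrow> length y = length x"
  by (induction x arbitrary: y) auto

lemma set_mutate: assumes "length x = n" "y \<in> set_pmf (mutate mu n x)" shows "length y = n"
  using assms set_bitwise_mut unfolding mutate_def flip_bit_def
  by (cases mu) (auto split: if_splits)

lemma set_tourn: "w \<in> set_pmf (tourn n tb P a b) \<Longrightarrow> w = a \<or> w = b"
  unfolding tourn_def by (auto split: if_splits)

lemma set_seq_pmf: "xs \<in> set_pmf (seq_pmf ps) \<Longrightarrow> length xs = length ps \<and> (\<forall>i<length ps. xs ! i \<in> set_pmf (ps ! i))"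
proof (induction ps arbitrary: xs)
  case Nil thus ?case by simp
next
  case (Cons p ps)
  then obtain x ys where "xs = x # ys" "x \<in> set_pmf p" "ys \<in> set_pmf (seq_pmf ps)" by auto
  thus ?case using Cons.IH[of ys] by (auto simp: nth_Cons split: nat.splits)
qed

definition perms :: "nat \<Rightarrow> nat list set" where
  "perms N = {xs. distinct xs \<and> set xs = {..<N}}"

lemma perms_fin: "finite (perms N)" "perms N \<noteq> {}"
proof -
  have "perms N \<subseteq> {xs. set xs \<subseteq> {..<N} \<and> length xs = N}"
    unfolding perms_def using distinct_card by fastforce
  thus "finite (perms N)" by (rule finite_subset) (rule finite_lists_length_eq, simp)
  show "perms N \<noteq> {}" unfolding perms_def using distinct_upt[of 0 N] by (metis (mono_tags) atLeast_upt empty_iff mem_Collect_eq)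
qed

lemma perms_len: "xs \<in> perms N \<Longrightarrow> length xs = N"
  unfolding perms_def using distinct_card by fastforce

definition pairs :: "nat \<Rightarrow> (nat \<times> nat) set" where
  "pairs N = {(a, b). a < N \<and> b < N \<and> a \<noteq> b}"

lemma pairs_fin: "finite (pairs N)" "N \<ge> 2 \<Longrightarrow> pairs N \<noteq> {}"
proof -
  show "finite (pairs N)" unfolding pairs_def by (rule finite_subset[of _ "{..<N} \<times> {..<N}"]) auto
  assume "N \<ge> 2" hence "(0,1) \<in> pairs N" unfolding pairs_def by auto
  thus "pairs N \<noteq> {}" by auto
qed

lemma mem_tp: "z \<in> set (map f [(\<pi>, i). \<pi> \<leftarrow> [p1, p2], i \<leftarrow> [0..<M]]) \<Longrightarrow> \<exists>\<pi> i. \<pi> \<in> {p1,p2} \<and> i < M \<and> z = f (\<pi>, i)"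
  by auto blast+

lemma set_offspring: assumes vp: "validpop n P" and len: "length P = N" and N2: "N \<ge> 2"
  and ev: "sel = TwoPerm \<Longrightarrow> even N" and Q: "Q \<in> set_pmf (offspring sel mu n tb N P)"
  shows "validpop n Q" "length Q = N"
proof -
  have Q': "validpop n Q \<and> length Q = N"
  proof (cases sel)
    case Independent
    let ?D = "do { ab \<leftarrow> pmf_of_set (pairs N); w \<leftarrow> tourn n tb P (fst ab) (snd ab); mutate mu n (P ! w) }"
    have QD: "Q \<in> set_pmf (replicate_pmf N ?D)" using Q unfolding offspring_def Independent pairs_def by simp
    have elem: "length y = n" if y: "y \<in> set_pmf ?D" for y
    proof -
      obtain ab w where ab: "ab \<in> pairs N" "w \<in> set_pmf (tourn n tb P (fst ab) (snd ab))" "y \<in> set_pmf (mutate mu n (P ! w))"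
        using y pairs_fin[of N] N2 by auto
      have "w < N" using set_tourn[OF ab(2)] ab(1) unfolding pairs_def by auto
      hence "length (P ! w) = n" using vp len unfolding validpop_def by auto
      thus ?thesis using set_mutate ab(3) by blast
    qed
    show ?thesis using QD elem unfolding set_replicate_pmf validpop_def by auto
  next
    case TwoPerm
    have evN: "even N" using ev TwoPerm by simp
    obtain p1 p2 where p: "p1 \<in> perms N" "p2 \<in> perms N"
      and Qs: "Q \<in> set_pmf (seq_pmf (map (\<lambda>(\<pi>, i). do { w \<leftarrow> tourn n tb P (\<pi> ! (2 * i)) (\<pi> ! (2 * i + 1));
                                         mutate mu n (P ! w) }) [(\<pi>, i). \<pi> \<leftarrow> [p1, p2], i \<leftarrow> [0..<N div 2]]))"
      using Q perms_fin[of N] unfolding offspring_def TwoPerm perms_def by auto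
    let ?ps = "map (\<lambda>(\<pi>, i). do { w \<leftarrow> tourn n tb P (\<pi> ! (2 * i)) (\<pi> ! (2 * i + 1)); mutate mu n (P ! w) }) [(\<pi>, i). \<pi> \<leftarrow> [p1, p2], i \<leftarrow> [0..<N div 2]]"
    have lQ: "length Q = length ?ps" and eQ: "\<forall>i<length ?ps. Q ! i \<in> set_pmf (?ps ! i)"
      using set_seq_pmf[OF Qs] by auto
    have lps: "length ?ps = N" using evN by (simp add: length_concat) (metis evenE add_self_div_2 mult_2)
    have elem: "length y = n" if y: "y \<in> set_pmf (do { w \<leftarrow> tourn n tb P (\<pi> ! (2 * i)) (\<pi> ! (2 * i + 1)); mutate mu n (P ! w) })"
      and pi: "\<pi> \<in> perms N" and i: "i < N div 2" for y \<pi> i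
    proof -
      obtain w where w: "w \<in> set_pmf (tourn n tb P (\<pi> ! (2 * i)) (\<pi> ! (2 * i + 1)))" "y \<in> set_pmf (mutate mu n (P ! w))"
        using y by auto
      have "2 * i + 1 < N" using i evN by auto
      hence "\<pi> ! (2*i) \<in> set \<pi>" "\<pi> ! (2*i+1) \<in> set \<pi>" using perms_len[OF pi] by auto
      hence "w < N" using set_tourn[OF w(1)] pi unfolding perms_def by auto
      hence "length (P ! w) = n" using vp len unfolding validpop_def by auto
      thus ?thesis using set_mutate w(2) by blast
    qed
    have "\<forall>y\<in>set Q. length y = n"
    proof
      fix y assume "y \<in> set Q"
      then obtain k where k: "k < length Q" "y = Q ! k" by (auto simp: in_set_conv_nth)
      have "?ps ! k \<in> set ?ps" by (rule nth_mem) (use k lQ in argo)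
      then obtain \<pi> i where pii: "\<pi> \<in> {p1, p2}" "i < N div 2"
        "?ps ! k = do { w \<leftarrow> tourn n tb P (\<pi> ! (2 * i)) (\<pi> ! (2 * i + 1)); mutate mu n (P ! w) }"
        using mem_tp by fastforce
      have "y \<in> set_pmf (?ps ! k)" using eQ k lQ by simp
      thus "length y = n" using elem[of _ \<pi> i] pii p by auto
    qed
    thus ?thesis using lQ lps unfolding validpop_def by simp
  qed
  show "validpop n Q" "length Q = N" using Q' by auto
qed


lemma pmf_map_Cons: "pmf (map_pmf (Cons e) M) (c # cs) = (if e = c then pmf M cs else 0)"
proof (cases "e = c")
  case True thus ?thesis using pmf_map_inj'[of "Cons c" M cs] by (simp add: inj_def)
next
  case False
  have "Cons e -` {c # cs} = {}" using False by auto
  thus ?thesis using False by (simp add: pmf_map)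
qed

lemma bwm_cons_eq: "bitwise_mut n (b # bs) = bernoulli_pmf (1 / real n) \<bind> (\<lambda>d. map_pmf (Cons (b \<noteq> d)) (bitwise_mut n bs))"
  by (simp add: map_pmf_def)

lemma pmf_bwm_cons: assumes "n \<ge> 1"
  shows "pmf (bitwise_mut n (b # bs)) (c # cs) = (if b \<noteq> c then 1 / real n else 1 - 1 / real n) * pmf (bitwise_mut n bs) cs"
proof -
  have p: "0 \<le> 1 / real n" "1 / real n \<le> 1" using assms by auto
  show ?thesis unfolding bwm_cons_eq pmf_bind
    using p by (subst integral_bernoulli_pmf) (auto simp: pmf_map_Cons)
qed

lemma pmf_bwm_self: assumes "n \<ge> 1" shows "pmf (bitwise_mut n y) y = (1 - 1 / real n) ^ length y"
  using assms by (induction y) (auto simp del: bitwise_mut.simps(2) simp add: pmf_bwm_cons)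

lemma pmf_bwm_flip: assumes "n \<ge> 1" "i < length y"
  shows "pmf (bitwise_mut n y) (flip_bit y i) = (1 / real n) * (1 - 1 / real n) ^ (length y - 1)"
  using assms(2)
proof (induction y arbitrary: i)
  case Nil thus ?case by simp
next
  case (Cons b bs)
  show ?case
  proof (cases i)
    case 0
    thus ?thesis using assms(1) by (simp del: bitwise_mut.simps add: flip_bit_def pmf_bwm_cons pmf_bwm_self)
  next
    case (Suc j)
    have j: "j < length bs" using Cons.prems Suc by simp
    have "flip_bit (b # bs) i = b # flip_bit bs j" using Suc by (simp add: flip_bit_def)
    hence "pmf (bitwise_mut n (b # bs)) (flip_bit (b # bs) i) = (1 - 1 / real n) * ((1 / real n) * (1 - 1 / real n) ^ (length bs - 1))"
      using Cons.IH[OF j] assms(1) by (simp del: bitwise_mut.simps add: pmf_bwm_cons)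
    also have "\<dots> = (1 / real n) * (1 - 1 / real n) ^ (length (b # bs) - 1)"
    proof -
      have e: "length (b # bs) - 1 = Suc (length bs - 1)" using j by simp
      show ?thesis unfolding e power_Suc by (simp only: mult_ac)
    qed
    finally show ?thesis .
  qed
qed

lemma exp_bound: assumes "n \<ge> (2::nat)" shows "(1 - 1 / real n) ^ (n - 1) \<ge> exp (-1)"
proof -
  let ?x = "1 / (real n - 1)"
  have n1: "real n - 1 > 0" using assms by simp
  have "1 + ?x \<le> exp ?x" by (rule exp_ge_add_one_self)
  moreover have "0 < ?x" using n1 by simp
  hence "0 < 1 + ?x" by linarith
  ultimately have "1 / exp ?x \<le> 1 / (1 + ?x)" by (intro divide_left_mono) auto
  also have "1 / (1 + ?x) = 1 - 1 / real n" using n1 by (simp add: field_simps)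
  finally have a: "exp (- ?x) \<le> 1 - 1 / real n" by (simp add: exp_minus field_simps)
  have "exp (-1) = exp (real (n - 1) * (- ?x))" using n1 assms by (simp add: of_nat_diff)
  also have "\<dots> = exp (- ?x) ^ (n - 1)" by (rule exp_of_nat_mult)
  also have "\<dots> \<le> (1 - 1 / real n) ^ (n - 1)" by (rule power_mono[OF a]) simp
  finally show ?thesis .
qed

lemma ones_card: "ones y = card {i. i < length y \<and> y ! i}"
  unfolding ones_def by (simp add: length_filter_conv_card)

lemma ones_flip: assumes "i < length y"
  shows "ones (flip_bit y i) = (if y ! i then ones y - 1 else ones y + 1)"
proof -
  let ?S = "{j. j < length y \<and> y ! j}"
  have fS: "finite ?S" by simp
  have eq: "{j. j < length (flip_bit y i) \<and> flip_bit y i ! j} = (if y ! i then ?S - {i} else insert i ?S)"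
    using assms unfolding flip_bit_def by (auto simp: nth_list_update)
  show ?thesis unfolding ones_card eq using assms fS by (auto simp: card_insert_if)
qed

lemma flip_inj: "inj_on (flip_bit y) {..<length y}"
proof (rule inj_onI)
  fix i j assume i: "i \<in> {..<length y}" and j: "j \<in> {..<length y}" and e: "flip_bit y i = flip_bit y j"
  show "i = j" proof (rule ccontr)
    assume ne: "i \<noteq> j"
    have "flip_bit y i ! i = (\<not> y ! i)" using i by (simp add: flip_bit_def)
    moreover have "flip_bit y j ! i = y ! i" using ne i by (simp add: flip_bit_def)
    ultimately show False using e by simp
  qed
qed

lemma mut_flip: assumes len: "length y = n" and n2: "n \<ge> 2" and I: "I \<subseteq> {..<n}"
  and t: "\<forall>i\<in>I. ones (flip_bit y i) = t"
  shows "measure_pmf.prob (mutate mu n y) {z. ones z = t} \<ge> real (card I) / (exp 1 * real n)"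
proof -
  have fI: "finite I" using I finite_subset by blast
  have sub: "flip_bit y ` I \<subseteq> {z. ones z = t}" using t by auto
  have inj: "inj_on (flip_bit y) I" using flip_inj[of y] I len by (auto intro: inj_on_subset)
  have n0: "real n > 0" using n2 by simp
  have e1: "exp 1 \<ge> (1::real)" by simp
  show ?thesis
  proof (cases mu)
    case OneBit
    have "measure_pmf.prob (mutate mu n y) {z. ones z = t} = measure_pmf.prob (pmf_of_set {..<n}) (flip_bit y -` {z. ones z = t})"
      unfolding OneBit mutate_def by simp
    also have "\<dots> = real (card ({..<n} \<inter> (flip_bit y -` {z. ones z = t}))) / real n"
      using n2 by (subst measure_pmf_of_set) (auto simp: lessThan_empty_iff)
    also have "\<dots> \<ge> real (card I) / real n"
    proof -
      have "I \<subseteq> {..<n} \<inter> (flip_bit y -` {z. ones z = t})" using I t by auto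
      hence "card I \<le> card ({..<n} \<inter> (flip_bit y -` {z. ones z = t}))" by (intro card_mono) auto
      thus ?thesis using n0 by (intro divide_right_mono) auto
    qed
    finally have a: "measure_pmf.prob (mutate mu n y) {z. ones z = t} \<ge> real (card I) / real n" .
    have "real (card I) / (exp 1 * real n) \<le> real (card I) / real n"
      using n0 e1 by (intro divide_left_mono) (auto simp: mult_le_cancel_right1)
    thus ?thesis using a by linarith
  next
    case Bitwise
    have "measure_pmf.prob (mutate mu n y) {z. ones z = t} \<ge> measure_pmf.prob (mutate mu n y) (flip_bit y ` I)"
      by (intro measure_pmf.finite_measure_mono sub) auto
    also have "measure_pmf.prob (mutate mu n y) (flip_bit y ` I) = (\<Sum>z\<in>flip_bit y ` I. pmf (bitwise_mut n y) z)"
      unfolding Bitwise mutate_def using fI by (simp add: measure_measure_pmf_finite)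
    also have "\<dots> = (\<Sum>i\<in>I. pmf (bitwise_mut n y) (flip_bit y i))" using inj by (simp add: sum.reindex)
    also have "\<dots> = (\<Sum>i\<in>I. (1 / real n) * (1 - 1 / real n) ^ (n - 1))"
      using I len n2 by (intro sum.cong) (auto simp: pmf_bwm_flip)
    also have "\<dots> = real (card I) * ((1 / real n) * (1 - 1 / real n) ^ (n - 1))" by simp
    finally have a: "measure_pmf.prob (mutate mu n y) {z. ones z = t} \<ge> real (card I) * ((1 / real n) * (1 - 1 / real n) ^ (n - 1))" .
    have "(1 / real n) * exp (-1) \<le> (1 / real n) * (1 - 1 / real n) ^ (n - 1)"
      by (rule mult_left_mono[OF exp_bound[OF n2]]) (use n0 in simp)
    hence "real (card I) * ((1 / real n) * exp (-1)) \<le> real (card I) * ((1 / real n) * (1 - 1 / real n) ^ (n - 1))"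
      by (rule mult_left_mono) simp
    moreover have "real (card I) * ((1 / real n) * exp (-1)) = real (card I) / (exp 1 * real n)"
      by (simp add: exp_minus field_simps)
    ultimately show ?thesis using a by linarith
  qed
qed

lemma card_zeros: assumes "length y = n" shows "card {i. i < n \<and> \<not> y ! i} = n - ones y"
proof -
  have "{i. i < n \<and> \<not> y ! i} = {..<n} - {i. i < length y \<and> y ! i}" using assms by auto
  moreover have "card {i. i < length y \<and> y ! i} = ones y" by (simp add: ones_card)
  moreover have "{i. i < length y \<and> y ! i} \<subseteq> {..<n}" using assms by auto
  ultimately show ?thesis using assms by (simp add: card_Diff_subset)
qed

lemma mut_up: assumes len: "length y = n" and n2: "n \<ge> 2"
  shows "measure_pmf.prob (mutate mu n y) {z. ones z = ones y + 1} \<ge> real (n - ones y) / (exp 1 * real n)"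
  using mut_flip[OF len n2, of "{i. i < n \<and> \<not> y ! i}" "ones y + 1" mu] card_zeros[OF len] len
  by (auto simp: ones_flip)

lemma mut_down: assumes len: "length y = n" and n2: "n \<ge> 2"
  shows "measure_pmf.prob (mutate mu n y) {z. ones z = ones y - 1} \<ge> real (ones y) / (exp 1 * real n)"
proof -
  have c: "card {i. i < n \<and> y ! i} = ones y" using len by (simp add: ones_card)
  show ?thesis
  using mut_flip[OF len n2, of "{i. i < n \<and> y ! i}" "ones y - 1" mu] len c
  by (auto simp: ones_flip)
qed


lemma prob_bind: "measure_pmf.prob (bind_pmf M f) A = measure_pmf.expectation M (\<lambda>x. measure_pmf.prob (f x) A)"
proof -
  have "ennreal (measure_pmf.prob (bind_pmf M f) A) = emeasure (bind_pmf M f) A"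
    by (simp add: measure_pmf.emeasure_eq_measure)
  also have "\<dots> = (\<integral>\<^sup>+x. emeasure (f x) A \<partial>M)" by (rule emeasure_bind_pmf)
  also have "\<dots> = (\<integral>\<^sup>+x. ennreal (measure_pmf.prob (f x) A) \<partial>M)"
    by (simp add: measure_pmf.emeasure_eq_measure)
  also have "\<dots> = ennreal (measure_pmf.expectation M (\<lambda>x. measure_pmf.prob (f x) A))"
    by (intro nn_integral_eq_integral measure_pmf.integrable_const_bound[where B=1]) auto
  finally show ?thesis by (simp add: integral_nonneg)
qed

lemma cdis_front_eq: assumes "validpop n P" "i < length P"
  shows "cdis_front n tb P i = cdis n tb P {..<length P} i"
  unfolding cdis_front_def rank1[OF assms] front1[OF assms(1)] ..

lemma tourn_win: assumes vp: "validpop n P" and x: "x < length P" and y: "y < length P"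
  and c: "cdis n tb P {..<length P} y < cdis n tb P {..<length P} x"
  shows "tourn n tb P x y = return_pmf x" "tourn n tb P y x = return_pmf x"
  using c unfolding tourn_def rank1[OF vp x] rank1[OF vp y] cdis_front_eq[OF vp x] cdis_front_eq[OF vp y]
  by auto

lemma card_pairs: "card (pairs N) = N * (N - 1)"
proof -
  have "pairs N = ({..<N} \<times> {..<N}) - (\<lambda>a. (a, a)) ` {..<N}" unfolding pairs_def by auto
  moreover have "card ((\<lambda>a. (a, a)) ` {..<N}) = N" by (subst card_image) (auto simp: inj_on_def)
  moreover have "(\<lambda>a. (a, a)) ` {..<N} \<subseteq> {..<N} \<times> {..<N}" by auto
  ultimately have "card (pairs N) = N * N - N" by (simp add: card_Diff_subset card_cartesian_product)
  thus ?thesis by (simp add: algebra_simps)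
qed

lemma integral_pmf_of_set_ge: assumes "finite S" "S \<noteq> {}" "G \<subseteq> S" "\<And>s. s \<in> S \<Longrightarrow> f s \<ge> (0::real)"
  "\<And>s. s \<in> G \<Longrightarrow> f s \<ge> c"
  shows "measure_pmf.expectation (pmf_of_set S) f \<ge> real (card G) * c / real (card S)"
proof -
  have fG: "finite G" using assms(1,3) finite_subset by blast
  have "real (card G) * c = (\<Sum>s\<in>G. c)" by simp
  also have "\<dots> \<le> (\<Sum>s\<in>G. f s)" by (rule sum_mono) (use assms in auto)
  also have "\<dots> \<le> (\<Sum>s\<in>S. f s)" by (rule sum_mono2) (use assms in auto)
  finally have "real (card G) * c / real (card S) \<le> (\<Sum>s\<in>S. f s) / real (card S)"
    by (intro divide_right_mono) auto
  thus ?thesis using assms by (simp add: integral_pmf_of_set)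
qed

lemma prob_replicate_none: "measure_pmf.prob (replicate_pmf k D) {Q. \<forall>z\<in>set Q. z \<notin> E} = (1 - measure_pmf.prob D E) ^ k"
proof (induction k)
  case 0 thus ?case by simp
next
  case (Suc k)
  let ?S = "{Q. \<forall>z\<in>set Q. z \<notin> E}"
  have "replicate_pmf (Suc k) D = D \<bind> (\<lambda>x. map_pmf (Cons x) (replicate_pmf k D))"
    by (simp add: map_pmf_def)
  hence "measure_pmf.prob (replicate_pmf (Suc k) D) ?S = measure_pmf.expectation D (\<lambda>x. measure_pmf.prob (map_pmf (Cons x) (replicate_pmf k D)) ?S)"
    by (simp add: prob_bind)
  also have "\<dots> = measure_pmf.expectation D (\<lambda>x. indicator (- E) x * (1 - measure_pmf.prob D E) ^ k)"
  proof (rule Bochner_Integration.integral_cong[OF refl])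
    fix x
    have "Cons x -` ?S = (if x \<in> E then {} else ?S)" by auto
    thus "measure_pmf.prob (map_pmf (Cons x) (replicate_pmf k D)) ?S = indicator (- E) x * (1 - measure_pmf.prob D E) ^ k"
      using Suc.IH by (auto simp: indicator_def)
  qed
  also have "\<dots> = measure_pmf.prob D (- E) * (1 - measure_pmf.prob D E) ^ k" by simp
  also have "measure_pmf.prob D (- E) = 1 - measure_pmf.prob D E"
    using measure_pmf.prob_compl[of E D] by (simp add: Compl_eq_Diff_UNIV)
  finally show ?case by simp
qed

lemma bernoulli_bound: assumes "0 \<le> q" "q \<le> 1" shows "1 - (1 - q) ^ N \<ge> real N * q / (1 + real N * q)"
proof -
  have "1 + real N * q \<le> (1 + q) ^ N" using assms by (intro Bernoulli_inequality) auto
  moreover have "(1 - q) ^ N * (1 + q) ^ N \<le> 1"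
  proof -
    have "(1 - q) ^ N * (1 + q) ^ N = (1 - q^2) ^ N" by (simp add: power_mult_distrib[symmetric] algebra_simps power2_eq_square)
    also have "\<dots> \<le> 1" using assms by (intro power_le_one) (auto simp: power2_eq_square mult_le_one)
    finally show ?thesis .
  qed
  ultimately have "(1 - q) ^ N * (1 + real N * q) \<le> 1"
    using assms by (meson mult_left_mono order_trans zero_le_power diff_ge_0_iff_ge)
  moreover have "1 + real N * q > 0" using assms by (simp add: add_pos_nonneg)
  ultimately have "(1 - q) ^ N \<le> 1 / (1 + real N * q)" by (simp add: le_divide_eq)
  moreover have "1 - 1 / (1 + real N * q) = real N * q / (1 + real N * q)"
  proof -
    have p: "1 + real N * q > 0" using assms by (simp add: add_pos_nonneg)
    have g: "\<And>a b::real. a = 1 + b \<Longrightarrow> a > 0 \<Longrightarrow> 1 - 1 / a = b / a"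
      by (simp add: field_simps)
    show ?thesis by (rule g[OF refl p])
  qed
  ultimately show ?thesis by linarith
qed

lemma seq_pmf_nth: "i < length ps \<Longrightarrow> map_pmf (\<lambda>Q. Q ! i) (seq_pmf ps) = ps ! i"
proof (induction ps arbitrary: i)
  case Nil thus ?case by simp
next
  case (Cons p ps)
  show ?case
  proof (cases i)
    case 0
    have "map_pmf (\<lambda>Q. Q ! i) (seq_pmf (p # ps)) = p \<bind> (\<lambda>x. map_pmf (\<lambda>_. x) (seq_pmf ps))"
      using 0 by (simp add: map_bind_pmf map_pmf_def[symmetric] pmf.map_comp o_def)
    also have "\<dots> = p" by (simp add: map_pmf_const bind_return_pmf')
    finally show ?thesis using 0 by simp
  next
    case (Suc j)
    have j: "j < length ps" using Cons.prems Suc by simp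
    have "map_pmf (\<lambda>Q. Q ! i) (seq_pmf (p # ps)) = p \<bind> (\<lambda>x. map_pmf (\<lambda>Q. Q ! j) (seq_pmf ps))"
      using Suc by (simp add: map_bind_pmf map_pmf_def[symmetric] pmf.map_comp o_def)
    also have "\<dots> = ps ! j" using Cons.IH[OF j] by simp
    finally show ?thesis using Suc by simp
  qed
qed


definition weak :: "nat \<Rightarrow> (pop \<Rightarrow> nat \<Rightarrow> nat set \<Rightarrow> nat list) \<Rightarrow> pop \<Rightarrow> nat \<Rightarrow> nat set" where
  "weak n tb P x = {y. y < length P \<and> y \<noteq> x \<and> cdis n tb P {..<length P} y < cdis n tb P {..<length P} x}"

lemma weak_ratio: assumes x: "x < length P" and NN: "length P \<ge> 4 * (n + 1)" and n3: "n \<ge> 3"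
  and beat: "card {y. y < length P \<and> y \<noteq> x \<and> cdis n tb P {..<length P} y \<ge> cdis n tb P {..<length P} x} \<le> 2 * n + 3"
  shows "real (card (weak n tb P x)) / real (length P - 1) \<ge> 3 / 8"
proof -
  let ?N = "length P"
  let ?B = "{y. y < ?N \<and> y \<noteq> x \<and> cdis n tb P {..<?N} y \<ge> cdis n tb P {..<?N} x}"
  have un: "{..<?N} - {x} = weak n tb P x \<union> ?B" unfolding weak_def by auto
  have dis: "weak n tb P x \<inter> ?B = {}" unfolding weak_def by auto
  have "card ({..<?N} - {x}) = ?N - 1" using x by simp
  hence "?N - 1 = card (weak n tb P x) + card ?B" unfolding un
    by (subst card_Un_disjoint[OF _ _ dis, symmetric]) (auto simp: weak_def)
  hence "card (weak n tb P x) \<ge> ?N - 1 - (2 * n + 3)" using beat by linarith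
  hence w: "real (card (weak n tb P x)) \<ge> real ?N - 1 - (2 * real n + 3)" using NN by linarith
  have N1: "real ?N - 1 > 0" using NN by simp
  have NR: "real ?N \<ge> 4 * real n + 4" using NN by simp
  have n3r: "real n \<ge> 3" using n3 by simp
  have "3 / 8 * (real ?N - 1) \<le> real (card (weak n tb P x))" using w NR n3r by (simp add: algebra_simps)
  thus ?thesis using N1 NN by (simp add: le_divide_eq of_nat_diff)
qed

lemma hit_indep: assumes tb: "valid_tb n tb" and vp: "validpop n P" and len: "length P = N"
  and NN: "N \<ge> 4 * (n + 1)" and n3: "n \<ge> 3" and x: "x < N"
  and beat: "card {y. y < length P \<and> y \<noteq> x \<and> cdis n tb P {..<length P} y \<ge> cdis n tb P {..<length P} x} \<le> 2 * n + 3"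
  shows "measure_pmf.prob (offspring Independent mu n tb N P) {Q. \<exists>z\<in>set Q. z \<in> E}
      \<ge> measure_pmf.prob (mutate mu n (P ! x)) E / 4"
proof -
  let ?W = "weak n tb P x"
  let ?mu = "measure_pmf.prob (mutate mu n (P ! x)) E"
  let ?h = "\<lambda>ab. measure_pmf.prob (tourn n tb P (fst ab) (snd ab) \<bind> (\<lambda>w. mutate mu n (P ! w))) E"
  define D where "D = pmf_of_set (pairs N) \<bind> (\<lambda>ab. tourn n tb P (fst ab) (snd ab) \<bind> (\<lambda>w. mutate mu n (P ! w)))"
  have off: "offspring Independent mu n tb N P = replicate_pmf N D"
    unfolding offspring_def D_def pairs_def by simp
  have N2: "N \<ge> 2" using NN by simp
  have ratio: "real (card ?W) / real (N - 1) \<ge> 3 / 8" using weak_ratio[OF _ _ n3 beat] x NN len by simp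
  have Wsub: "?W \<subseteq> {..<N} - {x}" unfolding weak_def using len by auto
  have cW: "card ?W \<le> N - 1"
  proof -
    have "card ?W \<le> card ({..<N} - {x})" by (intro card_mono Wsub) auto
    thus ?thesis using x by simp
  qed
  define G where "G = (\<lambda>y. (x, y)) ` ?W \<union> (\<lambda>y. (y, x)) ` ?W"
  have fW: "finite ?W" using Wsub finite_subset by blast
  have cG: "card G = 2 * card ?W"
  proof -
    have d: "(\<lambda>y. (x, y)) ` ?W \<inter> (\<lambda>y. (y, x)) ` ?W = {}" using Wsub by auto
    have "card G = card ((\<lambda>y. (x, y)) ` ?W) + card ((\<lambda>y. (y, x)) ` ?W)"
      unfolding G_def using fW d by (intro card_Un_disjoint) auto
    also have "\<dots> = card ?W + card ?W" by (subst (1 2) card_image) (auto simp: inj_on_def)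
    finally show ?thesis by simp
  qed
  have GS: "G \<subseteq> pairs N" unfolding G_def pairs_def using Wsub x by auto
  have hG: "?h ab = ?mu" if ab: "ab \<in> G" for ab
  proof -
    obtain y where y: "y \<in> ?W" "ab = (x, y) \<or> ab = (y, x)" using ab unfolding G_def by auto
    have yl: "y < length P" and cy: "cdis n tb P {..<length P} y < cdis n tb P {..<length P} x"
      using y(1) unfolding weak_def by auto
    have "tourn n tb P (fst ab) (snd ab) = return_pmf x"
      using y(2) tourn_win[OF vp _ yl cy] x len by auto
    thus ?thesis by (simp add: bind_return_pmf)
  qed
  have q: "measure_pmf.prob D E \<ge> real (card G) * ?mu / real (card (pairs N))"
    unfolding D_def
    by (subst prob_bind, rule integral_pmf_of_set_ge[OF pairs_fin(1) pairs_fin(2)[OF N2] GS]) (use hG in auto)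
  hence q': "real N * measure_pmf.prob D E \<ge> 2 * real (card ?W) * ?mu / real (N - 1)"
    using N2 unfolding cG card_pairs by (simp add: field_simps of_nat_diff)
  define s0 where "s0 = 2 * real (card ?W) * ?mu / real (N - 1)"
  define s where "s = real N * measure_pmf.prob D E"
  have s0n: "s0 \<ge> 0" unfolding s0_def by simp
  have s0s: "s0 \<le> s" using q' unfolding s0_def s_def by simp
  have s02: "s0 \<le> 2"
  proof -
    have "real (card ?W) / real (N - 1) \<le> 1" using cW N2 by (simp add: divide_le_eq)
    moreover have "?mu \<le> 1" by simp
    ultimately have "real (card ?W) / real (N - 1) * ?mu \<le> 1"
      by (meson mult_le_one divide_nonneg_nonneg of_nat_0_le_iff measure_nonneg)
    thus ?thesis unfolding s0_def by (simp add: field_simps)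
  qed
  have "measure_pmf.prob (offspring Independent mu n tb N P) {Q. \<exists>z\<in>set Q. z \<in> E}
      = 1 - measure_pmf.prob (replicate_pmf N D) {Q. \<forall>z\<in>set Q. z \<notin> E}"
  proof -
    have "{Q. \<exists>z\<in>set Q. z \<in> E} = UNIV - {Q. \<forall>z\<in>set Q. z \<notin> E}" by auto
    thus ?thesis unfolding off
      using measure_pmf.prob_compl[of "{Q. \<forall>z\<in>set Q. z \<notin> E}" "replicate_pmf N D"] by simp
  qed
  also have "\<dots> = 1 - (1 - measure_pmf.prob D E) ^ N" by (simp add: prob_replicate_none)
  also have "\<dots> \<ge> s / (1 + s)" unfolding s_def by (rule bernoulli_bound) auto
  finally have a: "measure_pmf.prob (offspring Independent mu n tb N P) {Q. \<exists>z\<in>set Q. z \<in> E} \<ge> s / (1 + s)" .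
  have "s0 / (1 + s0) \<le> s / (1 + s)" using s0n s0s by (simp add: field_simps)
  moreover have "s0 / 3 \<le> s0 / (1 + s0)" using s0n s02 by (intro divide_left_mono) auto
  moreover have "?mu / 4 \<le> s0 / 3"
  proof -
    have "?mu / 4 = 2 / 3 * (3 / 8) * ?mu" by simp
    also have "\<dots> \<le> 2 / 3 * (real (card ?W) / real (N - 1)) * ?mu"
      using ratio by (intro mult_right_mono mult_left_mono) auto
    also have "\<dots> = s0 / 3" unfolding s0_def by simp
    finally show ?thesis .
  qed
  ultimately show ?thesis using a by linarith
qed


definition swp :: "nat \<Rightarrow> nat \<Rightarrow> nat \<Rightarrow> nat" where
  "swp y z a = (if a = y then z else if a = z then y else a)"

definition pidx :: "nat list \<Rightarrow> nat \<Rightarrow> nat" where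
  "pidx \<pi> x = (THE p. p < length \<pi> \<and> \<pi> ! p = x)"

definition mate :: "nat \<Rightarrow> nat" where
  "mate p = (if even p then p + 1 else p - 1)"

definition partner :: "nat list \<Rightarrow> nat \<Rightarrow> nat" where
  "partner \<pi> x = \<pi> ! mate (pidx \<pi> x)"

lemma pidx_props: assumes "\<pi> \<in> perms N" "x < N"
  shows "pidx \<pi> x < N" "\<pi> ! pidx \<pi> x = x"
proof -
  have d: "distinct \<pi>" and s: "set \<pi> = {..<N}" using assms(1) unfolding perms_def by auto
  have l: "length \<pi> = N" using perms_len[OF assms(1)] .
  obtain p where p: "p < length \<pi>" "\<pi> ! p = x" using s assms(2) by (metis in_set_conv_nth lessThan_iff)
  have "pidx \<pi> x = p" unfolding pidx_def
    by (rule the_equality) (use p d nth_eq_iff_index_eq in metis)+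
  thus "pidx \<pi> x < N" "\<pi> ! pidx \<pi> x = x" using p l by auto
qed

lemma pidx_unique: assumes "\<pi> \<in> perms N" "p < N" "\<pi> ! p = x" shows "pidx \<pi> x = p"
proof -
  have d: "distinct \<pi>" using assms(1) unfolding perms_def by auto
  have l: "length \<pi> = N" using perms_len[OF assms(1)] .
  show ?thesis unfolding pidx_def
    by (rule the_equality) (use assms d l nth_eq_iff_index_eq in metis)+
qed

lemma mate_props: assumes "even N" "p < N" shows "mate p < N" "mate p \<noteq> p"
  using assms unfolding mate_def by (auto elim!: evenE oddE)

lemma partner_props: assumes "\<pi> \<in> perms N" "x < N" "even N"
  shows "partner \<pi> x < N" "partner \<pi> x \<noteq> x"
proof -
  have d: "distinct \<pi>" and s: "set \<pi> = {..<N}" using assms(1) unfolding perms_def by auto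
  have l: "length \<pi> = N" using perms_len[OF assms(1)] .
  note pp = pidx_props[OF assms(1,2)]
  note mp = mate_props[OF assms(3) pp(1)]
  have "\<pi> ! mate (pidx \<pi> x) \<in> set \<pi>" using mp l by simp
  thus "partner \<pi> x < N" using s unfolding partner_def by auto
  show "partner \<pi> x \<noteq> x" unfolding partner_def
    using d mp pp l by (metis nth_eq_iff_index_eq)
qed

lemma swp_inv: "swp y z (swp y z a) = a" unfolding swp_def by auto

lemma swp_range: "y < N \<Longrightarrow> z < N \<Longrightarrow> a < N \<Longrightarrow> swp y z a < N" unfolding swp_def by auto

lemma map_swp_perms: assumes "\<pi> \<in> perms N" "y < N" "z < N" shows "map (swp y z) \<pi> \<in> perms N"
proof -
  have d: "distinct \<pi>" and s: "set \<pi> = {..<N}" using assms(1) unfolding perms_def by auto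
  have inj: "inj (swp y z)" by (metis injI swp_inv)
  have "set (map (swp y z) \<pi>) = swp y z ` {..<N}" using s by simp
  also have "\<dots> = {..<N}"
  proof
    show "swp y z ` {..<N} \<subseteq> {..<N}" using swp_range assms by auto
    show "{..<N} \<subseteq> swp y z ` {..<N}"
    proof
      fix a assume a: "a \<in> {..<N}"
      have "a = swp y z (swp y z a)" by (simp add: swp_inv)
      moreover have "swp y z a \<in> {..<N}" using a swp_range assms by auto
      ultimately show "a \<in> swp y z ` {..<N}" by blast
    qed
  qed
  finally show ?thesis unfolding perms_def using d inj by (auto simp: distinct_map inj_on_def inj_def)
qed

lemma partner_swp: assumes "\<pi> \<in> perms N" "x < N" "y < N" "z < N" "x \<noteq> y" "x \<noteq> z" "even N"
  shows "partner (map (swp y z) \<pi>) x = swp y z (partner \<pi> x)"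
proof -
  have l: "length \<pi> = N" using perms_len[OF assms(1)] .
  note pp = pidx_props[OF assms(1,2)]
  have "map (swp y z) \<pi> ! pidx \<pi> x = x" using pp l assms(5,6) by (simp add: swp_def)
  hence "pidx (map (swp y z) \<pi>) x = pidx \<pi> x"
    using pidx_unique[OF map_swp_perms[OF assms(1,3,4)] pp(1)] by simp
  moreover have "mate (pidx \<pi> x) < length \<pi>" using mate_props[OF assms(7) pp(1)] l by simp
  ultimately show ?thesis unfolding partner_def by simp
qed

lemma map_swp_inv: "map (swp y z) (map (swp y z) \<pi>) = \<pi>"
  by (induction \<pi>) (auto simp: swp_inv)

lemma partner_class_eq: assumes x: "x < N" and ev: "even N" and y: "y \<in> {..<N} - {x}" and z: "z \<in> {..<N} - {x}"
  shows "card {\<pi>\<in>perms N. partner \<pi> x = y} = card {\<pi>\<in>perms N. partner \<pi> x = z}"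
proof (rule bij_betw_same_card[of "map (swp y z)"])
  have yz: "y < N" "z < N" "x \<noteq> y" "x \<noteq> z" using y z by auto
  show "bij_betw (map (swp y z)) {\<pi>\<in>perms N. partner \<pi> x = y} {\<pi>\<in>perms N. partner \<pi> x = z}"
  proof (rule bij_betw_byWitness[where f'="map (swp y z)"])
    show "\<forall>a\<in>{\<pi>\<in>perms N. partner \<pi> x = y}. map (swp y z) (map (swp y z) a) = a" using map_swp_inv by blast
    show "\<forall>a\<in>{\<pi>\<in>perms N. partner \<pi> x = z}. map (swp y z) (map (swp y z) a) = a" using map_swp_inv by blast
    show "map (swp y z) ` {\<pi>\<in>perms N. partner \<pi> x = y} \<subseteq> {\<pi>\<in>perms N. partner \<pi> x = z}"
      using map_swp_perms[OF _ yz(1,2)] partner_swp[OF _ x yz ev] by (auto simp: swp_def)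
    show "map (swp y z) ` {\<pi>\<in>perms N. partner \<pi> x = z} \<subseteq> {\<pi>\<in>perms N. partner \<pi> x = y}"
      using map_swp_perms[OF _ yz(1,2)] partner_swp[OF _ x yz ev] by (auto simp: swp_def)
  qed
qed

lemma card_partner_set: assumes x: "x < N" and ev: "even N" and S: "S \<subseteq> {..<N} - {x}"
  shows "card {\<pi>\<in>perms N. partner \<pi> x \<in> S} = (\<Sum>y\<in>S. card {\<pi>\<in>perms N. partner \<pi> x = y})"
proof -
  have fS: "finite S" using S finite_subset by blast
  have "{\<pi>\<in>perms N. partner \<pi> x \<in> S} = (\<Union>y\<in>S. {\<pi>\<in>perms N. partner \<pi> x = y})" by auto
  moreover have "card (\<Union>y\<in>S. {\<pi>\<in>perms N. partner \<pi> x = y}) = (\<Sum>y\<in>S. card {\<pi>\<in>perms N. partner \<pi> x = y})"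
    by (rule card_UN_disjoint) (use fS perms_fin(1)[of N] in auto)
  ultimately show ?thesis by simp
qed

lemma partner_frac: assumes x: "x < N" and ev: "even N" and W: "W \<subseteq> {..<N} - {x}"
  shows "real (card {\<pi>\<in>perms N. partner \<pi> x \<in> W}) / real (card (perms N)) = real (card W) / real (N - 1)"
proof -
  have N2: "N \<ge> 2" using x ev by (metis One_nat_def add_0 bot_nat_0.extremum_strict even_Suc_div_two le_less_Suc_eq less_2_cases not_less odd_one)
  define y0 :: nat where "y0 = (if x = 0 then 1 else 0)"
  have y0: "y0 \<in> {..<N} - {x}" unfolding y0_def using N2 by auto
  define c where "c = card {\<pi>\<in>perms N. partner \<pi> x = y0}"
  have cl: "card {\<pi>\<in>perms N. partner \<pi> x = y} = c" if "y \<in> {..<N} - {x}" for y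
    unfolding c_def by (rule partner_class_eq[OF x ev that y0])
  have all: "{\<pi>\<in>perms N. partner \<pi> x \<in> {..<N} - {x}} = perms N"
    using partner_props[OF _ x ev] by auto
  have cP: "card (perms N) = (N - 1) * c"
    using card_partner_set[OF x ev order.refl] cl x unfolding all by simp
  have cW: "card {\<pi>\<in>perms N. partner \<pi> x \<in> W} = card W * c"
    using card_partner_set[OF x ev W] cl W by (simp add: subset_iff)
  have "card (perms N) > 0" using perms_fin[of N] by (simp add: card_gt_0_iff)
  hence c0: "c > 0" using cP by simp
  show ?thesis unfolding cP cW using c0 by (simp add: field_simps)
qed


lemma tp_nth: "i < M \<Longrightarrow> [(\<pi>, i). \<pi> \<leftarrow> [p1, p2], i \<leftarrow> [0..<M]] ! i = (p1, i)"
  by (simp add: nth_append)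

lemma tp_len: "length [(\<pi>, i). \<pi> \<leftarrow> [p1, p2], i \<leftarrow> [0..<M]] = 2 * M"
  by (simp add: length_concat)

lemma prob_ge_nth: assumes "\<And>Q. Q \<in> set_pmf M \<Longrightarrow> i < length Q"
  shows "measure_pmf.prob M {Q. \<exists>z\<in>set Q. z \<in> E} \<ge> measure_pmf.prob (map_pmf (\<lambda>Q. Q ! i) M) E"
proof -
  have "measure_pmf.prob (map_pmf (\<lambda>Q. Q ! i) M) E = measure_pmf.prob M {Q. Q ! i \<in> E}" by (simp add: vimage_def)
  also have "\<dots> = measure_pmf.prob M ({Q. Q ! i \<in> E} \<inter> set_pmf M)" by (simp add: measure_Int_set_pmf)
  also have "\<dots> \<le> measure_pmf.prob M {Q. \<exists>z\<in>set Q. z \<in> E}"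
    by (rule measure_pmf.finite_measure_mono) (use assms in \<open>auto intro: nth_mem\<close>)
  finally show ?thesis .
qed

lemma hit_twoperm: assumes tb: "valid_tb n tb" and vp: "validpop n P" and len: "length P = N"
  and NN: "N \<ge> 4 * (n + 1)" and n3: "n \<ge> 3" and x: "x < N" and ev: "even N"
  and beat: "card {y. y < length P \<and> y \<noteq> x \<and> cdis n tb P {..<length P} y \<ge> cdis n tb P {..<length P} x} \<le> 2 * n + 3"
  shows "measure_pmf.prob (offspring TwoPerm mu n tb N P) {Q. \<exists>z\<in>set Q. z \<in> E}
      \<ge> measure_pmf.prob (mutate mu n (P ! x)) E / 4"
proof -
  let ?W = "weak n tb P x"
  let ?mu = "measure_pmf.prob (mutate mu n (P ! x)) E"
  let ?Ev = "{Q. \<exists>z\<in>set Q. z \<in> E}"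
  let ?f = "\<lambda>(\<pi>, i). tourn n tb P (\<pi> ! (2 * i)) (\<pi> ! (2 * i + 1)) \<bind> (\<lambda>w. mutate mu n (P ! w))"
  define ps where "ps = (\<lambda>\<pi>1 \<pi>2. map ?f [(\<pi>, i). \<pi> \<leftarrow> [\<pi>1, \<pi>2], i \<leftarrow> [0..<N div 2]])"
  have off: "offspring TwoPerm mu n tb N P = pmf_of_set (perms N) \<bind> (\<lambda>\<pi>1. pmf_of_set (perms N) \<bind> (\<lambda>\<pi>2. seq_pmf (ps \<pi>1 \<pi>2)))"
    unfolding offspring_def perms_def ps_def by simp
  have ratio: "real (card ?W) / real (N - 1) \<ge> 3 / 8" using weak_ratio[OF _ _ n3 beat] x NN len by simp
  have Wsub: "?W \<subseteq> {..<N} - {x}" unfolding weak_def using len by auto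
  have lps: "length (ps \<pi>1 \<pi>2) = N" for \<pi>1 \<pi>2 unfolding ps_def using ev by (simp add: tp_len) (metis evenE add_self_div_2 mult_2)
  have good: "measure_pmf.prob (seq_pmf (ps \<pi>1 \<pi>2)) ?Ev \<ge> ?mu" if p1: "\<pi>1 \<in> perms N" and pw: "partner \<pi>1 x \<in> ?W" for \<pi>1 \<pi>2
  proof -
    define p where "p = pidx \<pi>1 x"
    define i where "i = p div 2"
    have p: "p < N" "\<pi>1 ! p = x" using pidx_props[OF p1 x] unfolding p_def by auto
    have i: "i < N div 2" unfolding i_def using p ev by (auto elim!: evenE)
    have yl: "partner \<pi>1 x < length P" and cy: "cdis n tb P {..<length P} (partner \<pi>1 x) < cdis n tb P {..<length P} x"
      using pw unfolding weak_def by auto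
    have part: "\<pi>1 ! mate p = partner \<pi>1 x" unfolding partner_def p_def ..
    have tw: "tourn n tb P (\<pi>1 ! (2 * i)) (\<pi>1 ! (2 * i + 1)) = return_pmf x"
    proof (cases "even p")
      case True
      hence "2 * i = p" "2 * i + 1 = mate p" unfolding i_def mate_def by auto
      thus ?thesis using tourn_win(1)[OF vp _ yl cy] p x len part by simp
    next
      case False
      hence "2 * i = mate p" "2 * i + 1 = p" unfolding i_def mate_def by (auto elim!: oddE)
      thus ?thesis using tourn_win(2)[OF vp _ yl cy] p x len part by simp
    qed
    have il: "i < length (ps \<pi>1 \<pi>2)" using lps i by (simp add: ev)
    have l2: "i < length [(\<pi>, i). \<pi> \<leftarrow> [\<pi>1, \<pi>2], i \<leftarrow> [0..<N div 2]]"
      using i unfolding tp_len by simp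
    have "ps \<pi>1 \<pi>2 ! i = ?f ([(\<pi>, i). \<pi> \<leftarrow> [\<pi>1, \<pi>2], i \<leftarrow> [0..<N div 2]] ! i)"
      unfolding ps_def by (rule nth_map[OF l2])
    also have "\<dots> = ?f (\<pi>1, i)" using i by (simp only: tp_nth)
    also have "\<dots> = mutate mu n (P ! x)" using tw by (simp add: bind_return_pmf)
    finally have psi: "ps \<pi>1 \<pi>2 ! i = mutate mu n (P ! x)" .
    have "measure_pmf.prob (seq_pmf (ps \<pi>1 \<pi>2)) ?Ev \<ge> measure_pmf.prob (map_pmf (\<lambda>Q. Q ! i) (seq_pmf (ps \<pi>1 \<pi>2))) E"
      by (rule prob_ge_nth) (use set_seq_pmf il in fastforce)
    also have "map_pmf (\<lambda>Q. Q ! i) (seq_pmf (ps \<pi>1 \<pi>2)) = ps \<pi>1 \<pi>2 ! i" by (rule seq_pmf_nth[OF il])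
    finally show ?thesis using psi by simp
  qed
  have "measure_pmf.prob (offspring TwoPerm mu n tb N P) ?Ev
      = measure_pmf.expectation (pmf_of_set (perms N)) (\<lambda>\<pi>1. measure_pmf.expectation (pmf_of_set (perms N)) (\<lambda>\<pi>2. measure_pmf.prob (seq_pmf (ps \<pi>1 \<pi>2)) ?Ev))"
    unfolding off by (simp add: prob_bind)
  also have "\<dots> \<ge> real (card {\<pi>\<in>perms N. partner \<pi> x \<in> ?W}) * ?mu / real (card (perms N))"
  proof (rule integral_pmf_of_set_ge[OF perms_fin])
    show "{\<pi>\<in>perms N. partner \<pi> x \<in> ?W} \<subseteq> perms N" by auto
    fix \<pi>1 assume "\<pi>1 \<in> perms N"
    show "0 \<le> measure_pmf.expectation (pmf_of_set (perms N)) (\<lambda>\<pi>2. measure_pmf.prob (seq_pmf (ps \<pi>1 \<pi>2)) ?Ev)"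
      by (rule Bochner_Integration.integral_nonneg) auto
  next
    fix \<pi>1 assume p1: "\<pi>1 \<in> {\<pi>\<in>perms N. partner \<pi> x \<in> ?W}"
    have "measure_pmf.expectation (pmf_of_set (perms N)) (\<lambda>\<pi>2. measure_pmf.prob (seq_pmf (ps \<pi>1 \<pi>2)) ?Ev) \<ge> real (card (perms N)) * ?mu / real (card (perms N))"
      by (rule integral_pmf_of_set_ge[OF perms_fin order.refl]) (use good p1 in auto)
    thus "?mu \<le> measure_pmf.expectation (pmf_of_set (perms N)) (\<lambda>\<pi>2. measure_pmf.prob (seq_pmf (ps \<pi>1 \<pi>2)) ?Ev)"
      using perms_fin[of N] by (simp add: card_gt_0_iff)
  qed
  finally have a: "measure_pmf.prob (offspring TwoPerm mu n tb N P) ?Ev \<ge> real (card {\<pi>\<in>perms N. partner \<pi> x \<in> ?W}) / real (card (perms N)) * ?mu"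
    by simp
  have "real (card {\<pi>\<in>perms N. partner \<pi> x \<in> ?W}) / real (card (perms N)) = real (card ?W) / real (N - 1)"
    by (rule partner_frac[OF x ev Wsub])
  hence "real (card {\<pi>\<in>perms N. partner \<pi> x \<in> ?W}) / real (card (perms N)) * ?mu \<ge> 3 / 8 * ?mu"
    using ratio by (intro mult_right_mono) auto
  moreover have "3 / 8 * ?mu \<ge> ?mu / 4" by simp
  ultimately show ?thesis using a by linarith
qed


lemma exists_target: fixes V :: "nat set"
  assumes V: "V \<subseteq> {0..n}" "V \<noteq> {}" and u0: "u0 \<in> {0..n} - V"
  shows "\<exists>u\<in>{0..n} - V. (u \<ge> 1 \<and> u - 1 \<in> V \<and> 6 * (n - (u - 1)) \<ge> card ({0..n} - V))
                       \<or> (u + 1 \<in> V \<and> 6 * (u + 1) \<ge> card ({0..n} - V))"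
proof -
  let ?U = "{0..n} - V"
  have fV: "finite V" using V(1) finite_subset by blast
  define m where "m = Min V"
  define M where "M = Max V"
  have mV: "m \<in> V" and MV: "M \<in> V" unfolding m_def M_def using fV V(2) by auto
  have mle: "\<And>v. v \<in> V \<Longrightarrow> m \<le> v" and Mge: "\<And>v. v \<in> V \<Longrightarrow> v \<le> M" unfolding m_def M_def using fV by auto
  have Mn: "M \<le> n" using MV V(1) by auto
  have cU: "card ?U \<le> n + 1"
  proof -
    have "card ?U \<le> card {0..n}" by (rule card_mono) auto
    thus ?thesis by simp
  qed
  define Mid where "Mid = {w \<in> ?U. m < w \<and> w < M}"
  have fMid: "finite Mid" unfolding Mid_def by simp
  show ?thesis
  proof (cases "Mid = {}")
    case False
    define u1 where "u1 = Min Mid"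
    define u2 where "u2 = Max Mid"
    have u1M: "u1 \<in> Mid" and u2M: "u2 \<in> Mid" unfolding u1_def u2_def using fMid False by auto
    have u12: "u1 \<le> u2" unfolding u1_def using fMid u2M by auto
    have u1V: "u1 - 1 \<in> V"
    proof (cases "u1 - 1 = m")
      case True thus ?thesis using mV by simp
    next
      case False
      have r: "m < u1 - 1" "u1 - 1 < M" "u1 - 1 \<le> n" using u1M False unfolding Mid_def by auto
      show ?thesis proof (rule ccontr)
        assume "u1 - 1 \<notin> V"
        hence "u1 - 1 \<in> Mid" using r unfolding Mid_def by auto
        hence "u1 \<le> u1 - 1" unfolding u1_def using fMid by auto
        thus False using r by auto
      qed
    qed
    have u2V: "u2 + 1 \<in> V"
    proof (cases "u2 + 1 = M")
      case True thus ?thesis using MV by simp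
    next
      case False
      have r: "m < u2 + 1" "u2 + 1 < M" "u2 + 1 \<le> n" using u2M False Mn unfolding Mid_def by auto
      show ?thesis proof (rule ccontr)
        assume "u2 + 1 \<notin> V"
        hence "u2 + 1 \<in> Mid" using r unfolding Mid_def by auto
        hence "u2 + 1 \<le> u2" unfolding u2_def using fMid by auto
        thus False by auto
      qed
    qed
    have u1U: "u1 \<in> ?U" and u2U: "u2 \<in> ?U" using u1M u2M unfolding Mid_def by auto
    have u1pos: "u1 \<ge> 1" using u1M unfolding Mid_def by auto
    have u1n: "u1 \<le> n" using u1U by auto
    show ?thesis
    proof (cases "2 * (n - (u1 - 1)) \<ge> n + 1")
      case True
      then obtain k where k: "k = n - (u1 - 1)" "2 * k \<ge> n + 1" by blast
      hence "6 * k \<ge> card ?U" using cU by linarith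
      hence "6 * (n - (u1 - 1)) \<ge> card ?U" using k(1) by simp
      thus ?thesis using u1U u1V u1pos by blast
    next
      case False
      have "n - (u1 - 1) = n + 1 - u1" using u1pos u1n by simp
      hence "2 * u2 + 2 \<ge> n + 1" using False u12 u1n u1pos by simp
      hence "6 * u2 + 6 \<ge> card ?U" using cU by linarith
      hence "6 * (u2 + 1) \<ge> card ?U" by simp
      thus ?thesis using u2U u2V by blast
    qed
  next
    case True
    have sub: "?U \<subseteq> {0..<m} \<union> {M<..n}"
    proof
      fix w assume w: "w \<in> ?U"
      have "w \<noteq> m" "w \<noteq> M" using w mV MV by auto
      moreover have "\<not> (m < w \<and> w < M)" using True w unfolding Mid_def by auto
      ultimately show "w \<in> {0..<m} \<union> {M<..n}" using w by auto
    qed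
    have "card ?U \<le> card ({0..<m} \<union> {M<..n})" by (intro card_mono sub) auto
    also have "\<dots> \<le> card {0..<m} + card {M<..n}" by (rule card_Un_le)
    finally have cU2: "card ?U \<le> m + (n - M)" by simp
    have Upos: "card ?U > 0" using u0 by (auto simp: card_gt_0_iff)
    show ?thesis
    proof (cases "m \<ge> n - M")
      case True
      hence m1: "m \<ge> 1" using cU2 Upos by linarith
      have "m - 1 \<in> ?U" using mle m1 mV V(1) by force
      moreover have "m - 1 + 1 \<in> V" using m1 mV by simp
      moreover have "6 * m \<ge> card ?U" using m1 True cU2 by linarith
      hence "6 * (m - 1 + 1) \<ge> card ?U" using m1 by simp
      ultimately show ?thesis by blast
    next
      case False
      hence M1: "M + 1 \<le> n" using cU2 Upos by linarith
      have "M + 1 \<in> ?U" using Mge M1 by force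
      moreover have "M + 1 - 1 \<in> V" "M + 1 \<ge> 1" using MV by auto
      moreover have "6 * (n - M) \<ge> card ?U" using False cU2 by linarith
      hence "6 * (n - (M + 1 - 1)) \<ge> card ?U" by simp
      ultimately show ?thesis by blast
    qed
  qed
qed


lemma exp_bind: fixes g :: "'b \<Rightarrow> real"
  assumes g0: "\<And>x. 0 \<le> g x" and gB: "\<And>x. g x \<le> B"
  shows "measure_pmf.expectation (M \<bind> f) g = measure_pmf.expectation M (\<lambda>x. measure_pmf.expectation (f x) g)"
proof -
  have int: "integrable (measure_pmf K) g" for K
    by (rule measure_pmf.integrable_const_bound[where B=B]) (use g0 gB in auto)
  have e0: "0 \<le> measure_pmf.expectation K g" for K by (rule Bochner_Integration.integral_nonneg) (use g0 in auto)
  have eB: "measure_pmf.expectation K g \<le> B" for K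
  proof -
    have "measure_pmf.expectation K g \<le> measure_pmf.expectation K (\<lambda>_. B)"
      by (rule integral_mono[OF int]) (use gB in auto)
    thus ?thesis by simp
  qed
  have int2: "integrable (measure_pmf M) (\<lambda>x. measure_pmf.expectation (f x) g)"
    by (rule measure_pmf.integrable_const_bound[where B=B]) (use e0 eB in auto)
  have "ennreal (measure_pmf.expectation (M \<bind> f) g) = (\<integral>\<^sup>+y. ennreal (g y) \<partial>measure_pmf (bind_pmf M f))"
    by (rule nn_integral_eq_integral[symmetric]) (use int g0 in auto)
  also have "\<dots> = (\<integral>\<^sup>+x. \<integral>\<^sup>+y. ennreal (g y) \<partial>f x \<partial>M)" by simp
  also have "\<dots> = (\<integral>\<^sup>+x. ennreal (measure_pmf.expectation (f x) g) \<partial>M)"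
    by (rule nn_integral_cong, rule nn_integral_eq_integral) (use int g0 in auto)
  also have "\<dots> = ennreal (measure_pmf.expectation M (\<lambda>x. measure_pmf.expectation (f x) g))"
    by (rule nn_integral_eq_integral) (use int2 e0 in auto)
  finally show ?thesis
    by (subst (asm) ennreal_inj) (auto intro!: Bochner_Integration.integral_nonneg e0 g0)
qed

lemma exp_mono_supp: fixes f g :: "'b \<Rightarrow> real"
  assumes "\<And>x. x \<in> set_pmf M \<Longrightarrow> f x \<le> g x" "\<And>x. \<bar>f x\<bar> \<le> B" "\<And>x. \<bar>g x\<bar> \<le> B"
  shows "measure_pmf.expectation M f \<le> measure_pmf.expectation M g"
proof (rule integral_mono_AE)
  show "integrable (measure_pmf M) f" by (rule measure_pmf.integrable_const_bound[where B=B]) (use assms in auto)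
  show "integrable (measure_pmf M) g" by (rule measure_pmf.integrable_const_bound[where B=B]) (use assms in auto)
  show "AE x in measure_pmf M. f x \<le> g x" using assms(1) by (simp add: AE_measure_pmf_iff)
qed

definition Xp :: "nat \<Rightarrow> pop \<Rightarrow> real" where
  "Xp n P = real (card ({0..n} - ones ` set P))"

lemma Xp_bounds: "0 \<le> Xp n P" "Xp n P \<le> real n + 1"
proof -
  show "0 \<le> Xp n P" unfolding Xp_def by simp
  have "card ({0..n} - ones ` set P) \<le> card {0..n}" by (rule card_mono) auto
  thus "Xp n P \<le> real n + 1" unfolding Xp_def by simp
qed

lemma six: "6 * (a::real) / (24 * c * d) = a / (4 * (c * d))"
proof -
  have "24 * c * d = 6 * (4 * (c * d))" by simp
  thus ?thesis by simp
qed

lemma four: "(a::real) / (c * d) \<le> m \<Longrightarrow> a / (4 * (c * d)) \<le> m / 4"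
proof -
  assume h: "a / (c * d) \<le> m"
  have "a / (4 * (c * d)) = (a / (c * d)) / 4" by simp
  thus ?thesis using h by simp
qed

lemma hit_any: assumes tb: "valid_tb n tb" and vp: "validpop n P" and len: "length P = N"
  and NN: "N \<ge> 4 * (n + 1)" and n3: "n \<ge> 3" and x: "x < N" and ev: "sel = TwoPerm \<Longrightarrow> even N"
  and beat: "card {y. y < length P \<and> y \<noteq> x \<and> cdis n tb P {..<length P} y \<ge> cdis n tb P {..<length P} x} \<le> 2 * n + 3"
  shows "measure_pmf.prob (offspring sel mu n tb N P) {Q. \<exists>z\<in>set Q. z \<in> E}
      \<ge> measure_pmf.prob (mutate mu n (P ! x)) E / 4"
  using hit_indep[OF tb vp len NN n3 x beat] hit_twoperm[OF tb vp len NN n3 x _ beat] ev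
  by (cases sel) auto

lemma target_prob: assumes tb: "valid_tb n tb" and vp: "validpop n P" and len: "length P = N"
  and NN: "N \<ge> 4 * (n + 1)" and n4: "n \<ge> 4" and ev: "sel = TwoPerm \<Longrightarrow> even N"
  and X0: "Xp n P > 0"
  shows "\<exists>u\<in>{0..n} - ones ` set P. measure_pmf.prob (offspring sel mu n tb N P) {Q. \<exists>z\<in>set Q. z \<in> {z. ones z = u}}
      \<ge> Xp n P / (24 * exp 1 * real n)"
proof -
  let ?V = "ones ` set P"
  have Vsub: "?V \<subseteq> {0..n}" using vp ones_le unfolding validpop_def by auto
  have Vne: "?V \<noteq> {}" using len NN by auto
  obtain u0 where u0: "u0 \<in> {0..n} - ?V" using X0 unfolding Xp_def by (metis card.empty ex_in_conv of_nat_0 less_irrefl)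
  obtain u where u: "u \<in> {0..n} - ?V" and cases: "(u \<ge> 1 \<and> u - 1 \<in> ?V \<and> 6 * (n - (u - 1)) \<ge> card ({0..n} - ?V))
                       \<or> (u + 1 \<in> ?V \<and> 6 * (u + 1) \<ge> card ({0..n} - ?V))"
    using exists_target[OF Vsub Vne u0] by blast
  have n3: "n \<ge> 3" and n2: "n \<ge> 2" and npos: "real n > 0" using n4 by auto
  have miss: "\<forall>y<length P. ones (P ! y) \<noteq> u" using u by auto
  have en: "exp 1 * real n > 0" using npos by simp
  from cases show ?thesis
  proof
    assume c: "u \<ge> 1 \<and> u - 1 \<in> ?V \<and> 6 * (n - (u - 1)) \<ge> card ({0..n} - ?V)"
    then obtain i where i: "i < length P" "ones (P ! i) = u - 1" by (auto simp: in_set_conv_nth)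
    have miss': "\<forall>y<length P. ones (P ! y) \<noteq> ones (P ! i) + 1" using miss i c by auto
    obtain x where x: "x < length P" "ones (P ! x) = ones (P ! i)"
      and beat: "card {y. y < length P \<and> y \<noteq> x \<and> cdis n tb P {..<length P} y \<ge> cdis n tb P {..<length P} x} \<le> 2 * n + 3"
      using strong_up[OF tb vp i(1) miss'] by blast
    have lx: "length (P ! x) = n" using vp x(1) unfolding validpop_def by auto
    have ox: "ones (P ! x) + 1 = u" using x(2) i(2) c by simp
    have mu: "measure_pmf.prob (mutate mu n (P ! x)) {z. ones z = u} \<ge> real (n - (u - 1)) / (exp 1 * real n)"
      using mut_up[OF lx n2, of mu] ox x(2) i(2) by simp
    have "Xp n P / (24 * exp 1 * real n) \<le> real (n - (u - 1)) / (4 * (exp 1 * real n))"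
    proof -
      have "Xp n P \<le> 6 * real (n - (u - 1))" using c unfolding Xp_def by linarith
      hence "Xp n P / (24 * exp 1 * real n) \<le> 6 * real (n - (u - 1)) / (24 * exp 1 * real n)"
        using en by (intro divide_right_mono) auto
      thus ?thesis by (simp only: six)
    qed
    also have "\<dots> \<le> measure_pmf.prob (mutate mu n (P ! x)) {z. ones z = u} / 4" using mu by (rule four)
    also have "\<dots> \<le> measure_pmf.prob (offspring sel mu n tb N P) {Q. \<exists>z\<in>set Q. z \<in> {z. ones z = u}}"
      by (rule hit_any[OF tb vp len NN n3 _ ev]) (use x len beat in auto)
    finally show ?thesis using u by blast
  next
    assume c: "u + 1 \<in> ?V \<and> 6 * (u + 1) \<ge> card ({0..n} - ?V)"
    then obtain i where i: "i < length P" "ones (P ! i) = u + 1" by (auto simp: in_set_conv_nth)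
    have miss': "\<forall>y<length P. ones (P ! y) \<noteq> ones (P ! i) - 1" using miss i by auto
    obtain x where x: "x < length P" "ones (P ! x) = ones (P ! i)"
      and beat: "card {y. y < length P \<and> y \<noteq> x \<and> cdis n tb P {..<length P} y \<ge> cdis n tb P {..<length P} x} \<le> 2 * n + 3"
      using strong_down[OF tb vp i(1) _ miss'] i(2) by auto
    have lx: "length (P ! x) = n" using vp x(1) unfolding validpop_def by auto
    have ox: "ones (P ! x) - 1 = u" using x(2) i(2) by simp
    have mu: "measure_pmf.prob (mutate mu n (P ! x)) {z. ones z = u} \<ge> real (u + 1) / (exp 1 * real n)"
      using mut_down[OF lx n2, of mu] ox x(2) i(2) by simp
    have "Xp n P / (24 * exp 1 * real n) \<le> real (u + 1) / (4 * (exp 1 * real n))"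
    proof -
      have "Xp n P \<le> 6 * real (u + 1)" using c unfolding Xp_def by linarith
      hence "Xp n P / (24 * exp 1 * real n) \<le> 6 * real (u + 1) / (24 * exp 1 * real n)"
        using en by (intro divide_right_mono) auto
      thus ?thesis by (simp only: six)
    qed
    also have "\<dots> \<le> measure_pmf.prob (mutate mu n (P ! x)) {z. ones z = u} / 4" using mu by (rule four)
    also have "\<dots> \<le> measure_pmf.prob (offspring sel mu n tb N P) {Q. \<exists>z\<in>set Q. z \<in> {z. ones z = u}}"
      by (rule hit_any[OF tb vp len NN n3 _ ev]) (use x len beat in auto)
    finally show ?thesis using u by blast
  qed
qed


lemma step_support: assumes tb: "valid_tb n tb" and vp: "validpop n P" and len: "length P = N"
  and NN: "N \<ge> 4 * (n + 1)" and ev: "sel = TwoPerm \<Longrightarrow> even N"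
  and Q: "Q \<in> set_pmf (offspring sel mu n tb N P)" and P': "P' \<in> set_pmf (survive n tb N (P @ Q))"
  shows "validpop n P'" "length P' = N" "{0..n} - ones ` set P' \<subseteq> ({0..n} - ones ` set P) - ones ` set Q"
proof -
  have N2: "N \<ge> 2" using NN by simp
  have vQ: "validpop n Q" and lQ: "length Q = N" using set_offspring[OF vp len N2 ev Q] by auto
  have vR: "validpop n (P @ Q)" using vp vQ unfolding validpop_def by auto
  have lR: "length (P @ Q) = 2 * N" using len lQ by simp
  note sp = survive_props[OF tb vR lR NN P']
  show "validpop n P'" "length P' = N" using sp by auto
  show "{0..n} - ones ` set P' \<subseteq> ({0..n} - ones ` set P) - ones ` set Q" using sp(3) by auto
qed

lemma Xp_sub: "{0..n} - ones ` set P' \<subseteq> ({0..n} - ones ` set P) - ones ` set Q \<Longrightarrow> Xp n P' \<le> Xp n P"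
  unfolding Xp_def by (auto intro!: card_mono)

lemma Xp_sub1: assumes "{0..n} - ones ` set P' \<subseteq> ({0..n} - ones ` set P) - ones ` set Q"
  and "u \<in> {0..n} - ones ` set P" and "u \<in> ones ` set Q"
  shows "Xp n P' \<le> Xp n P - 1"
proof -
  have "{0..n} - ones ` set P' \<subseteq> ({0..n} - ones ` set P) - {u}" using assms by auto
  hence "card ({0..n} - ones ` set P') \<le> card (({0..n} - ones ` set P) - {u})" by (intro card_mono) auto
  also have "\<dots> = card ({0..n} - ones ` set P) - 1" using assms(2) by (subst card_Diff_singleton) auto
  finally have "card ({0..n} - ones ` set P') \<le> card ({0..n} - ones ` set P) - 1" .
  moreover have "card ({0..n} - ones ` set P) > 0" using assms(2) by (auto simp: card_gt_0_iff)
  ultimately show ?thesis unfolding Xp_def by linarith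
qed

lemma step_drift: assumes tb: "valid_tb n tb" and vp: "validpop n P" and len: "length P = N"
  and NN: "N \<ge> 4 * (n + 1)" and n4: "n \<ge> 4" and ev: "sel = TwoPerm \<Longrightarrow> even N"
  shows "measure_pmf.expectation (nsga_step sel mu n tb N P) (Xp n) \<le> (1 - 1 / (24 * exp 1 * real n)) * Xp n P"
proof -
  let ?off = "offspring sel mu n tb N P"
  let ?S = "\<lambda>Q. survive n tb N (P @ Q)"
  have B: "\<And>P. \<bar>Xp n P\<bar> \<le> real n + 1" using Xp_bounds by (simp add: abs_le_iff)
  have E: "measure_pmf.expectation (nsga_step sel mu n tb N P) (Xp n) = measure_pmf.expectation ?off (\<lambda>Q. measure_pmf.expectation (?S Q) (Xp n))"
    unfolding nsga_step_def by (rule exp_bind[where B="real n + 1"]) (use Xp_bounds in auto)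
  have inner_abs: "\<bar>measure_pmf.expectation (?S Q) (Xp n)\<bar> \<le> real n + 1" for Q
  proof -
    have "0 \<le> measure_pmf.expectation (?S Q) (Xp n)" by (rule Bochner_Integration.integral_nonneg) (use Xp_bounds in auto)
    moreover have "measure_pmf.expectation (?S Q) (Xp n) \<le> measure_pmf.expectation (?S Q) (\<lambda>_. real n + 1)"
      by (rule exp_mono_supp[where B="real n + 1"]) (use Xp_bounds B in auto)
    ultimately show ?thesis by simp
  qed
  show ?thesis
  proof (cases "Xp n P > 0")
    case False
    hence X0: "Xp n P = 0" using Xp_bounds(1)[of n P] by linarith
    have "measure_pmf.expectation ?off (\<lambda>Q. measure_pmf.expectation (?S Q) (Xp n)) \<le> measure_pmf.expectation ?off (\<lambda>_. 0)"
    proof (rule exp_mono_supp[where B="real n + 1"])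
      fix Q assume Q: "Q \<in> set_pmf ?off"
      have "measure_pmf.expectation (?S Q) (Xp n) \<le> measure_pmf.expectation (?S Q) (\<lambda>_. 0)"
      proof (rule exp_mono_supp[where B="real n + 1"])
        fix P' assume P': "P' \<in> set_pmf (?S Q)"
        show "Xp n P' \<le> 0" using Xp_sub[OF step_support(3)[OF tb vp len NN ev Q P']] X0 by simp
      qed (use B in auto)
      thus "measure_pmf.expectation (?S Q) (Xp n) \<le> 0" by simp
    qed (use inner_abs in auto)
    thus ?thesis using E X0 by simp
  next
    case True
    obtain u where u: "u \<in> {0..n} - ones ` set P"
      and pr: "measure_pmf.prob ?off {Q. \<exists>z\<in>set Q. z \<in> {z. ones z = u}} \<ge> Xp n P / (24 * exp 1 * real n)"
      using target_prob[OF tb vp len NN n4 ev True] by blast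
    let ?A = "{Q. \<exists>z\<in>set Q. z \<in> {z. ones z = u}}"
    have XB: "Xp n P \<le> real n + 1" "0 \<le> Xp n P" using Xp_bounds by auto
    have gb: "\<bar>Xp n P - indicator ?A Q\<bar> \<le> real n + 1" for Q using XB by (auto simp: indicator_def abs_le_iff)
    have "measure_pmf.expectation ?off (\<lambda>Q. measure_pmf.expectation (?S Q) (Xp n)) \<le> measure_pmf.expectation ?off (\<lambda>Q. Xp n P - indicator ?A Q)"
    proof (rule exp_mono_supp[where B="real n + 1"])
      fix Q assume Q: "Q \<in> set_pmf ?off"
      have "measure_pmf.expectation (?S Q) (Xp n) \<le> measure_pmf.expectation (?S Q) (\<lambda>_. Xp n P - indicator ?A Q)"
      proof (rule exp_mono_supp[where B="real n + 1"])
        fix P' assume P': "P' \<in> set_pmf (?S Q)"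
        show "Xp n P' \<le> Xp n P - indicator ?A Q"
        proof (cases "Q \<in> ?A")
          case True
          hence "u \<in> ones ` set Q" by auto
          thus ?thesis using Xp_sub1[OF step_support(3)[OF tb vp len NN ev Q P'] u] True by simp
        next
          case False thus ?thesis using Xp_sub[OF step_support(3)[OF tb vp len NN ev Q P']] by simp
        qed
      qed (use B gb in blast)+
      thus "measure_pmf.expectation (?S Q) (Xp n) \<le> Xp n P - indicator ?A Q" by simp
    qed (use inner_abs gb in blast)+
    also have "\<dots> = Xp n P - measure_pmf.prob ?off ?A"
      by (subst Bochner_Integration.integral_diff) (auto intro!: measure_pmf.integrable_const_bound[where B=1] simp: indicator_def)
    also have "\<dots> \<le> Xp n P - Xp n P / (24 * exp 1 * real n)" using pr by simp
    also have "\<dots> = (1 - 1 / (24 * exp 1 * real n)) * Xp n P" by (simp add: algebra_simps)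
    finally show ?thesis using E by simp
  qed
qed


lemma nsga_support: assumes tb: "valid_tb n tb" and vp: "validpop n P" and len: "length P = N"
  and NN: "N \<ge> 4 * (n + 1)" and ev: "sel = TwoPerm \<Longrightarrow> even N"
  and P': "P' \<in> set_pmf (nsga_step sel mu n tb N P)"
  shows "validpop n P'" "length P' = N"
proof -
  obtain Q where Q: "Q \<in> set_pmf (offspring sel mu n tb N P)" and P'': "P' \<in> set_pmf (survive n tb N (P @ Q))"
    using P' unfolding nsga_step_def by auto
  show "validpop n P'" "length P' = N" using step_support[OF tb vp len NN ev Q P''] by auto
qed

lemma init_support: "P \<in> set_pmf (init_pop n N) \<Longrightarrow> validpop n P \<and> length P = N"
proof -
  have fin: "finite {x :: bool list. length x = n}"
    using finite_lists_length_eq[of "UNIV :: bool set" n] by simp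
  have ne: "{x :: bool list. length x = n} \<noteq> {}" using length_replicate[of n True] by blast
  assume "P \<in> set_pmf (init_pop n N)"
  thus ?thesis unfolding init_pop_def set_replicate_pmf using fin ne by (auto simp: validpop_def)
qed

lemma aug_support: assumes tb: "valid_tb n tb" and NN: "N \<ge> 4 * (n + 1)" and ev: "sel = TwoPerm \<Longrightarrow> even N"
  shows "s \<in> set_pmf (aug_state sel mu n tb N t) \<Longrightarrow> validpop n (fst s) \<and> length (fst s) = N"
proof (induction t arbitrary: s)
  case 0 thus ?case using init_support by auto
next
  case (Suc t)
  then obtain P h P' where s: "(P, h) \<in> set_pmf (aug_state sel mu n tb N t)" "P' \<in> set_pmf (nsga_step sel mu n tb N P)"
    "s = (P', h \<or> covers_front n P)" by auto
  have "validpop n P \<and> length P = N" using Suc.IH[OF s(1)] by simp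
  thus ?case using nsga_support[OF tb _ _ NN ev s(2)] s(3) by auto
qed

lemma Xp_le_n: assumes "validpop n P" "P \<noteq> []" shows "Xp n P \<le> real n"
proof -
  obtain x where x: "x \<in> set P" using assms(2) by (cases P) auto
  have "ones x \<in> {0..n}" using assms(1) x ones_le unfolding validpop_def by auto
  hence "{0..n} - ones ` set P \<subseteq> {0..n} - {ones x}" using x by auto
  hence "card ({0..n} - ones ` set P) \<le> card ({0..n} - {ones x})" by (intro card_mono) auto
  also have "\<dots> = n" using \<open>ones x \<in> {0..n}\<close> by simp
  finally show ?thesis unfolding Xp_def by simp
qed

lemma Xp_ge1: assumes "validpop n P" "\<not> covers_front n P" shows "Xp n P \<ge> 1"
proof -
  have "\<not> {0..n} \<subseteq> ones ` set P" using covers_iff[OF assms(1)] assms(2) by simp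
  hence "{0..n} - ones ` set P \<noteq> {}" by auto
  hence "card ({0..n} - ones ` set P) > 0" by (simp add: card_gt_0_iff)
  thus ?thesis unfolding Xp_def by simp
qed

definition qq :: "nat \<Rightarrow> real" where "qq n = 1 - 1 / (24 * exp 1 * real n)"

lemma inv_le1: "(D::real) \<ge> 1 \<Longrightarrow> 1 / D \<le> 1 \<and> 0 \<le> 1 / D"
  by (simp add: divide_le_eq_1)

lemma qq_bounds: "n \<ge> 1 \<Longrightarrow> 0 \<le> qq n \<and> qq n \<le> 1"
proof -
  assume n: "n \<ge> 1"
  have "exp 1 \<ge> (1::real)" by simp
  moreover have "real n \<ge> 1" using n by simp
  ultimately have "exp 1 * real n \<ge> 1 * 1" by (intro mult_mono) auto
  hence "24 * exp 1 * real n \<ge> 1" by linarith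
  hence "1 / (24 * exp 1 * real n) \<le> 1" "0 \<le> 1 / (24 * exp 1 * real n)"
    using inv_le1[of "24 * exp 1 * real n"] by auto
  thus ?thesis unfolding qq_def by simp
qed

lemma aug_exp: assumes tb: "valid_tb n tb" and NN: "N \<ge> 4 * (n + 1)" and n4: "n \<ge> 4"
  and ev: "sel = TwoPerm \<Longrightarrow> even N"
  shows "measure_pmf.expectation (aug_state sel mu n tb N t) (\<lambda>s. Xp n (fst s)) \<le> real n * qq n ^ t"
proof (induction t)
  case 0
  have "measure_pmf.expectation (aug_state sel mu n tb N 0) (\<lambda>s. Xp n (fst s)) \<le> measure_pmf.expectation (aug_state sel mu n tb N 0) (\<lambda>_. real n)"
  proof (rule exp_mono_supp[where B="real n + 1"])
    fix s assume s: "s \<in> set_pmf (aug_state sel mu n tb N 0)"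
    have "validpop n (fst s) \<and> length (fst s) = N" using aug_support[OF tb NN ev s] .
    moreover have "N > 0" using NN by simp
    ultimately show "Xp n (fst s) \<le> real n" using Xp_le_n by fastforce
  qed (use Xp_bounds in \<open>auto simp: abs_le_iff\<close>)
  thus ?case by simp
next
  case (Suc t)
  let ?A = "aug_state sel mu n tb N t"
  let ?F = "\<lambda>s. nsga_step sel mu n tb N (fst s) \<bind> (\<lambda>P'. return_pmf (P', snd s \<or> covers_front n (fst s)))"
  have eq: "aug_state sel mu n tb N (Suc t) = ?A \<bind> ?F"
    by (simp add: case_prod_beta')
  have "measure_pmf.expectation (aug_state sel mu n tb N (Suc t)) (\<lambda>s. Xp n (fst s))
      = measure_pmf.expectation ?A (\<lambda>s. measure_pmf.expectation (?F s) (\<lambda>s. Xp n (fst s)))"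
    unfolding eq by (rule exp_bind[where B="real n + 1"]) (use Xp_bounds in auto)
  also have "\<dots> = measure_pmf.expectation ?A (\<lambda>s. measure_pmf.expectation (nsga_step sel mu n tb N (fst s)) (Xp n))"
  proof (rule Bochner_Integration.integral_cong[OF refl])
    fix s
    show "measure_pmf.expectation (?F s) (\<lambda>s. Xp n (fst s)) = measure_pmf.expectation (nsga_step sel mu n tb N (fst s)) (Xp n)"
      by (subst exp_bind[where B="real n + 1"]) (use Xp_bounds in auto)
  qed
  also have "\<dots> \<le> measure_pmf.expectation ?A (\<lambda>s. qq n * Xp n (fst s))"
  proof (rule exp_mono_supp[where B="real n + 1"])
    fix s assume s: "s \<in> set_pmf ?A"
    have "validpop n (fst s) \<and> length (fst s) = N" using aug_support[OF tb NN ev s] .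
    thus "measure_pmf.expectation (nsga_step sel mu n tb N (fst s)) (Xp n) \<le> qq n * Xp n (fst s)"
      using step_drift[OF tb _ _ NN n4 ev] unfolding qq_def by auto
  next
    fix s
    have "0 \<le> measure_pmf.expectation (nsga_step sel mu n tb N (fst s)) (Xp n)"
      by (rule Bochner_Integration.integral_nonneg) (use Xp_bounds in auto)
    moreover have "measure_pmf.expectation (nsga_step sel mu n tb N (fst s)) (Xp n) \<le> measure_pmf.expectation (nsga_step sel mu n tb N (fst s)) (\<lambda>_. real n + 1)"
      by (rule exp_mono_supp[where B="real n + 1"]) (use Xp_bounds in \<open>auto simp: abs_le_iff\<close>)
    ultimately show "\<bar>measure_pmf.expectation (nsga_step sel mu n tb N (fst s)) (Xp n)\<bar> \<le> real n + 1" by simp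
  next
    fix s
    have q: "0 \<le> qq n" "qq n \<le> 1" using qq_bounds[of n] n4 by auto
    have "qq n * Xp n (fst s) \<le> 1 * Xp n (fst s)" using q Xp_bounds(1)[of n "fst s"] by (intro mult_right_mono) auto
    thus "\<bar>qq n * Xp n (fst s)\<bar> \<le> real n + 1" using q Xp_bounds[of n "fst s"] by (simp add: abs_le_iff)
  qed
  also have "\<dots> = qq n * measure_pmf.expectation ?A (\<lambda>s. Xp n (fst s))" by simp
  also have "\<dots> \<le> qq n * (real n * qq n ^ t)" using Suc.IH qq_bounds[of n] n4 by (intro mult_left_mono) auto
  finally show ?case by (simp add: algebra_simps)
qed

lemma probT_bound: assumes tb: "valid_tb n tb" and NN: "N \<ge> 4 * (n + 1)" and n4: "n \<ge> 4"
  and ev: "sel = TwoPerm \<Longrightarrow> even N"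
  shows "prob_T_ge sel mu n tb N (Suc t) \<le> real n * qq n ^ t"
proof -
  let ?A = "aug_state sel mu n tb N t"
  let ?F = "\<lambda>s. nsga_step sel mu n tb N (fst s) \<bind> (\<lambda>P'. return_pmf (P', snd s \<or> covers_front n (fst s)))"
  have eq: "aug_state sel mu n tb N (Suc t) = ?A \<bind> ?F"
    by (simp add: case_prod_beta')
  have "prob_T_ge sel mu n tb N (Suc t) = measure_pmf.expectation ?A (\<lambda>s. measure_pmf.prob (?F s) {s. \<not> snd s})"
    unfolding prob_T_ge_def eq by (rule prob_bind)
  also have "\<dots> \<le> measure_pmf.expectation ?A (\<lambda>s. Xp n (fst s))"
  proof (rule exp_mono_supp[where B="real n + 1"])
    fix s assume s: "s \<in> set_pmf ?A"
    have vp: "validpop n (fst s)" using aug_support[OF tb NN ev s] by simp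
    show "measure_pmf.prob (?F s) {s. \<not> snd s} \<le> Xp n (fst s)"
    proof (cases "covers_front n (fst s)")
      case True
      have "measure_pmf.prob (?F s) {s. \<not> snd s} = 0"
      proof -
        have "set_pmf (?F s) \<inter> {s. \<not> snd s} = {}" using True by auto
        thus ?thesis by (simp add: measure_pmf_zero_iff)
      qed
      thus ?thesis using Xp_bounds(1) by simp
    next
      case False
      have "measure_pmf.prob (?F s) {s. \<not> snd s} \<le> 1" by simp
      also have "\<dots> \<le> Xp n (fst s)" using Xp_ge1[OF vp False] .
      finally show ?thesis .
    qed
  qed (use Xp_bounds in \<open>auto simp: abs_le_iff intro: order_trans[OF measure_pmf.prob_le_1]\<close>)
  also have "\<dots> \<le> real n * qq n ^ t" by (rule aug_exp[OF tb NN n4 ev])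
  finally show ?thesis .
qed


definition dd :: "nat \<Rightarrow> real" where "dd n = 1 / (24 * exp 1 * real n)"

lemma dd_props: assumes "n \<ge> 1" shows "0 < dd n" "dd n \<le> 1 / 2" "qq n = 1 - dd n" "1 / dd n = 24 * exp 1 * real n"
proof -
  have e: "exp 1 \<ge> (1::real)" by simp
  have n: "real n \<ge> 1" using assms by simp
  have "exp 1 * real n \<ge> 1 * 1" using e n by (intro mult_mono) auto
  hence D: "24 * exp 1 * real n \<ge> 2" by linarith
  show "0 < dd n" unfolding dd_def using D by simp
  show "dd n \<le> 1 / 2" unfolding dd_def using D by (simp add: divide_le_eq)
  show "qq n = 1 - dd n" unfolding dd_def qq_def ..
  show "1 / dd n = 24 * exp 1 * real n" unfolding dd_def by simp
qed

lemma qq_exp: assumes "n \<ge> 1" shows "qq n ^ t \<le> exp (- dd n * real t)"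
proof -
  note d = dd_props[OF assms]
  have "qq n \<le> exp (- dd n)" using exp_ge_add_one_self[of "- dd n"] d(3) by simp
  hence "qq n ^ t \<le> exp (- dd n) ^ t" using d by (intro power_mono) auto
  also have "\<dots> = exp (real t * (- dd n))" by (rule exp_of_nat_mult[symmetric])
  finally show ?thesis by (simp add: mult.commute)
qed

lemma probT_le1: "prob_T_ge sel mu n tb N t \<le> 1"
  unfolding prob_T_ge_def by simp

lemma expect_bound: assumes tb: "valid_tb n tb" and NN: "N \<ge> 4 * (n + 1)" and n4: "n \<ge> 4"
  and ev: "sel = TwoPerm \<Longrightarrow> even N"
  shows "expected_T sel mu n tb N \<le> ennreal (200 * exp 1 / 3 * n * (ln n + 1))"
proof -
  have n1: "n \<ge> 1" using n4 by simp
  note d = dd_props[OF n1]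
  let ?q = "qq n"
  have q0: "0 \<le> ?q" "?q < 1" using d by auto
  have lnn: "ln (real n) \<ge> 0" using n1 by simp
  define s0 where "s0 = nat \<lceil>ln (real n) / dd n\<rceil>"
  define h where "h t = (if t < s0 then 1 else ?q ^ (t - s0))" for t
  have h0: "h t \<ge> 0" for t unfolding h_def using q0 by auto
  have ns0: "real n * ?q ^ s0 \<le> 1"
  proof -
    have "real s0 \<ge> ln (real n) / dd n" unfolding s0_def by linarith
    hence "dd n * real s0 \<ge> ln (real n)" using d(1) by (simp add: field_simps)
    hence "exp (- dd n * real s0) \<le> exp (- ln (real n))" by simp
    also have "\<dots> = 1 / real n" using n1 by (simp add: exp_minus inverse_eq_divide)
    finally have "?q ^ s0 \<le> 1 / real n" using qq_exp[OF n1, of s0] by linarith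
    thus ?thesis using n1 by (simp add: field_simps)
  qed
  have ph: "prob_T_ge sel mu n tb N (Suc t) \<le> h t" for t
  proof (cases "t < s0")
    case True thus ?thesis unfolding h_def using probT_le1 by simp
  next
    case False
    have "prob_T_ge sel mu n tb N (Suc t) \<le> real n * ?q ^ t" by (rule probT_bound[OF tb NN n4 ev])
    also have "\<dots> = (real n * ?q ^ s0) * ?q ^ (t - s0)" using False by (simp add: power_add[symmetric])
    also have "\<dots> \<le> 1 * ?q ^ (t - s0)" using ns0 q0 by (intro mult_right_mono) auto
    finally show ?thesis unfolding h_def using False by simp
  qed
  have geo: "(\<lambda>k. ?q ^ k) sums (1 / (1 - ?q))" by (rule geometric_sums) (use q0 in auto)
  have hs: "(\<lambda>k. h (k + s0)) = (\<lambda>k. ?q ^ k)" unfolding h_def by auto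
  have sh: "summable h" using geo hs summable_iff_shift[of h s0] by (auto simp: sums_iff)
  have "suminf h = (\<Sum>k. h (k + s0)) + (\<Sum>i<s0. h i)" by (rule suminf_split_initial_segment[OF sh])
  also have "(\<Sum>k. h (k + s0)) = 1 / (1 - ?q)" using geo hs by (simp add: sums_iff)
  also have "(\<Sum>i<s0. h i) = real s0" unfolding h_def by simp
  finally have sumh: "suminf h = 24 * exp 1 * real n + real s0" using d by simp
  have x0: "ln (real n) / dd n \<ge> 0" using lnn d(1) by simp
  have "real s0 = real_of_int \<lceil>ln (real n) / dd n\<rceil>" unfolding s0_def using x0 by simp
  hence "real s0 \<le> ln (real n) / dd n + 1" using of_int_ceiling_le_add_one[of "ln (real n) / dd n"] by simp
  also have "ln (real n) / dd n = 24 * exp 1 * real n * ln (real n)" using d by (simp add: field_simps)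
  finally have s0b: "real s0 \<le> 24 * exp 1 * real n * ln (real n) + 1" .
  have fin: "suminf h \<le> 200 * exp 1 / 3 * real n * (ln (real n) + 1)"
  proof -
    have en: "exp 1 * real n \<ge> 1" using n1 by (metis exp_ge_one_plus_x_over_n_power_n less_eq_real_def mult_ge1_I one_le_exp_iff of_nat_1 of_nat_mono zero_le_one) 
    have "suminf h \<le> 24 * (exp 1 * real n) * (ln (real n) + 1) + 1" using sumh s0b by (simp add: algebra_simps)
    also have "\<dots> \<le> 24 * (exp 1 * real n) * (ln (real n) + 1) + 128 / 3 * (exp 1 * real n) * (ln (real n) + 1)"
    proof -
      have X1: "1 \<le> (exp 1 * real n) * (ln (real n) + 1)" using en lnn by (metis le_add_same_cancel2 mult_1_right mult_mono zero_le_one order_trans)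
      define X where "X = (exp 1 * real n) * (ln (real n) + 1)"
      have "1 \<le> 128 / 3 * X" using X1 unfolding X_def[symmetric] by linarith
      moreover have "128 / 3 * (exp 1 * real n) * (ln (real n) + 1) = 128 / 3 * X" unfolding X_def by (simp only: mult.assoc)
      ultimately show ?thesis by linarith
    qed
    also have "\<dots> = 200 * exp 1 / 3 * real n * (ln (real n) + 1)" by (simp add: algebra_simps)
    finally show ?thesis .
  qed
  have "expected_T sel mu n tb N \<le> (\<Sum>t. ennreal (h t))"
    unfolding expected_T_def by (rule suminf_le) (auto intro!: ennreal_leI ph)
  also have "\<dots> = ennreal (suminf h)" by (rule suminf_ennreal2[OF h0 sh])
  also have "\<dots> \<le> ennreal (200 * exp 1 / 3 * n * (ln n + 1))" using fin by (intro ennreal_leI) simp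
  finally show ?thesis .
qed

lemma tail_bound: assumes tb: "valid_tb n tb" and NN: "N \<ge> 4 * (n + 1)" and n4: "n \<ge> 4"
  and ev: "sel = TwoPerm \<Longrightarrow> even N" and del: "(\<delta>::real) \<ge> 0"
  shows "prob_T_ge sel mu n tb N (nat \<lceil>200 * exp 1 / 3 * (1 + \<delta>) * n * ln n\<rceil>) \<le> 2 * real n powr (- \<delta>)"
proof -
  have n1: "n \<ge> 1" using n4 by simp
  note d = dd_props[OF n1]
  let ?q = "qq n"
  define x where "x = 200 * exp 1 / 3 * (1 + \<delta>) * n * ln n"
  define T0 where "T0 = nat \<lceil>x\<rceil>"
  have lnp: "ln (real n) > 0" using n4 by simp
  have xp: "x > 0" unfolding x_def using lnp del n4 by (intro mult_pos_pos) auto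
  have T0x: "real T0 \<ge> x" unfolding T0_def by linarith
  have T01: "T0 \<ge> 1" using T0x xp by (cases T0) auto
  have q0: "0 \<le> ?q" "?q \<ge> 1 / 2" using d by auto
  have "prob_T_ge sel mu n tb N T0 = prob_T_ge sel mu n tb N (Suc (T0 - 1))" using T01 by simp
  also have "\<dots> \<le> real n * ?q ^ (T0 - 1)" by (rule probT_bound[OF tb NN n4 ev])
  also have "?q ^ (T0 - 1) \<le> 2 * ?q ^ T0"
  proof -
    have "?q ^ T0 = ?q * ?q ^ (T0 - 1)" using T01 by (cases T0) auto
    moreover have "?q * ?q ^ (T0 - 1) \<ge> 1 / 2 * ?q ^ (T0 - 1)" using q0 by (intro mult_right_mono) auto
    ultimately show ?thesis by linarith
  qed
  also have "?q ^ T0 \<le> exp (- dd n * real T0)" by (rule qq_exp[OF n1])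
  also have "exp (- dd n * real T0) \<le> exp (- ((1 + \<delta>) * ln (real n)))"
  proof -
    have "dd n * x = 200 / 72 * ((1 + \<delta>) * ln (real n))"
      unfolding x_def dd_def using n1 by (simp add: field_simps)
    also have "\<dots> \<ge> (1 + \<delta>) * ln (real n)"
    proof -
      have "(1 + \<delta>) * ln (real n) \<ge> 0" using del lnp by simp
      thus ?thesis by linarith
    qed
    finally have "dd n * x \<ge> (1 + \<delta>) * ln (real n)" .
    moreover have "dd n * real T0 \<ge> dd n * x" using T0x d(1) by (intro mult_left_mono) auto
    ultimately show ?thesis by simp
  qed
  also have "exp (- ((1 + \<delta>) * ln (real n))) = real n powr (- (1 + \<delta>))"
    using n1 by (simp add: powr_def algebra_simps)
  finally have "prob_T_ge sel mu n tb N T0 \<le> real n * (2 * real n powr (- (1 + \<delta>)))"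
    using n1 by (simp add: mult_left_mono)
  also have "\<dots> = 2 * (real n powr 1 * real n powr (- (1 + \<delta>)))" using n1 by simp
  also have "real n powr 1 * real n powr (- (1 + \<delta>)) = real n powr (- \<delta>)"
  proof -
    have "real n powr (1 + - (1 + \<delta>)) = real n powr 1 * real n powr (- (1 + \<delta>))" by (rule powr_add)
    moreover have "1 + - (1 + \<delta>) = - \<delta>" by simp
    ultimately show ?thesis by simp
  qed
  finally show ?thesis unfolding T0_def x_def .
qed


theorem theorem6:
  fixes n N :: nat and sel :: selection and mu :: mutation
    and tb :: "pop \<Rightarrow> nat \<Rightarrow> nat set \<Rightarrow> nat list"
  assumes "n \<ge> 4" and "N \<ge> 4 * (n + 1)"
    and "sel = TwoPerm \<Longrightarrow> even N"
    and "valid_tb n tb"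
  shows "expected_T sel mu n tb N \<le> ennreal (200 * exp 1 / 3 * n * (ln n + 1))
    \<and> ennreal N * expected_T sel mu n tb N \<le> ennreal (200 * exp 1 / 3 * N * n * (ln n + 1))
    \<and> (\<forall>\<delta>::real. \<delta> \<ge> 0 \<longrightarrow>
           prob_T_ge sel mu n tb N (nat \<lceil>200 * exp 1 / 3 * (1 + \<delta>) * n * ln n\<rceil>) \<le> 2 * real n powr (- \<delta>))"
proof (intro conjI allI impI)
  show e: "expected_T sel mu n tb N \<le> ennreal (200 * exp 1 / 3 * n * (ln n + 1))"
    by (rule expect_bound[OF assms(4) assms(2) assms(1) assms(3)])
  have b0: "0 \<le> 200 * exp 1 / 3 * real n * (ln (real n) + 1)" using assms(1) by simp
  have "ennreal N * expected_T sel mu n tb N \<le> ennreal N * ennreal (200 * exp 1 / 3 * n * (ln n + 1))"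
    using e by (rule mult_left_mono) simp
  also have "\<dots> = ennreal (real N * (200 * exp 1 / 3 * n * (ln n + 1)))"
    by (rule ennreal_mult[symmetric]) (use b0 in auto)
  also have "real N * (200 * exp 1 / 3 * n * (ln n + 1)) = 200 * exp 1 / 3 * N * n * (ln n + 1)"
    by (simp add: algebra_simps)
  finally show "ennreal N * expected_T sel mu n tb N \<le> ennreal (200 * exp 1 / 3 * N * n * (ln n + 1))" .
  fix \<delta> :: real assume d: "\<delta> \<ge> 0"
  note tb = tail_bound[OF assms(4) assms(2) assms(1) assms(3) d]
  show "prob_T_ge sel mu n tb N (nat \<lceil>200 * exp 1 / 3 * (1 + \<delta>) * n * ln n\<rceil>) \<le> 2 * real n powr (- \<delta>)"
    using tb by simp
qed


end
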